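(* Let $(M,d,\mu)$ be a non-compact metric measure space satisfying the doubling property (D) and the reverse doubling inequality (RD). Let $1\le p_0<2$, and let $L$ be a non-negative self-adjoint operator on $L^2(M)$ satisfying $(DG_\rho^{p_0})$. Then the null space of $L$ is trivial, $N(L)=\{0\}$, and hence $\overline{R(L)}=L^2(M)$.
   Context: Notation. $B(x,r)$ is the open ball of centre $x$ and radius $r$, and $V(x,r)=\mu(B(x,r))$; $p_0'$ is the conjugate exponent of $p_0$ (with $1'=\infty$). Doubling property (D): $V(x,2r)\le CV(x,r)$ for all $x\in M$ and $r>0$. Reverse doubling inequality (RD): there is $\nu'>0$ with $V(x,r)/V(x,s)\ge c(r/s)^{\nu'}$ for all $x\in M$ and $r\ge s>0$. Scaling function. Fix $1<\beta_1\le\beta_2$ and put $\rho(t)=t^{\beta_1}$ for $0<t<1$ and $\rho(t)=t^{\beta_2}$ for $t\ge1$. Condition $(DG^{p_0}_\rho)$: for all $x,y\in M$ and $t>0$, $$\|\mathbb 1_{B(x,t)}e^{-\rho(t)L}\mathbb 1_{B(y,t)}\|_{p_0\to p_0'}\le\frac{C}{V(x,t)^{1/p_0-1/p_0'}}\exp\Big(-c\big(\tfrac{d(x,y)}{t}\big)^{\beta_1/(\beta_1-1)}\Big)\quad(0<t<1),$$ and the same bound with $\beta_2$ in place of $\beta_1$ for $t\ge1$. *)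

theory Defs
  imports "HOL-Analysis.Analysis"
begin

definition mms :: "('a::metric_space) measure \<Rightarrow> bool" where
  "mms mu \<longleftrightarrow> sets mu = sets borel \<and>
     (\<forall>x r. r > 0 \<longrightarrow> 0 < emeasure mu (ball x r) \<and> emeasure mu (ball x r) < \<infinity>)"

definition V :: "('a::metric_space) measure \<Rightarrow> 'a \<Rightarrow> real \<Rightarrow> real" where
  "V mu x r = measure mu (ball x r)"

definition doubling :: "('a::metric_space) measure \<Rightarrow> bool" where
  "doubling mu \<longleftrightarrow> (\<exists>C. \<forall>x r. r > 0 \<longrightarrow> V mu x (2 * r) \<le> C * V mu x r)"

definition reverse_doubling :: "('a::metric_space) measure \<Rightarrow> bool" where
  "reverse_doubling mu \<longleftrightarrow> (\<exists>\<nu>' > 0. \<exists>c > 0. \<forall>x r s. 0 < s \<longrightarrow> s \<le> r \<longrightarrow>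
       V mu x r / V mu x s \<ge> c * (r / s) powr \<nu>')"

definition L2 :: "'a measure \<Rightarrow> ('a \<Rightarrow> complex) set" where
  "L2 mu = {f. f \<in> borel_measurable mu \<and> integrable mu (\<lambda>x. (cmod (f x))\<^sup>2)}"

definition L2norm :: "'a measure \<Rightarrow> ('a \<Rightarrow> complex) \<Rightarrow> real" where
  "L2norm mu f = sqrt (\<integral>x. (cmod (f x))\<^sup>2 \<partial>mu)"

text \<open>L^p norm for finite p (used only when it is finite).\<close>
definition Lpnorm :: "'a measure \<Rightarrow> real \<Rightarrow> ('a \<Rightarrow> complex) \<Rightarrow> real" where
  "Lpnorm mu p f = (enn2real (\<integral>\<^sup>+x. ennreal (cmod (f x) powr p) \<partial>mu)) powr (1 / p)"

definition conj_exp :: "real \<Rightarrow> ereal" where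
  "conj_exp p = (if p = 1 then \<infinity> else ereal (p / (p - 1)))"

definition Lnorm_le :: "'a measure \<Rightarrow> ereal \<Rightarrow> ('a \<Rightarrow> complex) \<Rightarrow> real \<Rightarrow> bool" where
  "Lnorm_le mu q g A \<longleftrightarrow>
     (if q = \<infinity> then (AE x in mu. cmod (g x) \<le> A)
      else 0 \<le> A \<and> (\<integral>\<^sup>+x. ennreal (cmod (g x) powr real_of_ereal q) \<partial>mu)
                      \<le> ennreal (A powr real_of_ereal q))"

text \<open>T t represents exp(-t L). A non-negative self-adjoint operator L on L^2 corresponds
exactly to a strongly continuous semigroup of self-adjoint contractions on L^2
(L is minus its generator). Functions are identified up to a.e. equality.\<close>
definition heat_semigroup :: "'a measure \<Rightarrow> (real \<Rightarrow> ('a \<Rightarrow> complex) \<Rightarrow> ('a \<Rightarrow> complex)) \<Rightarrow> bool" where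
  "heat_semigroup mu T \<longleftrightarrow>
     (\<forall>t\<ge>0. \<forall>f\<in>L2 mu. T t f \<in> L2 mu) \<and>
     (\<forall>t\<ge>0. \<forall>f\<in>L2 mu. \<forall>g\<in>L2 mu. (AE x in mu. f x = g x) \<longrightarrow> (AE x in mu. T t f x = T t g x)) \<and>
     (\<forall>t\<ge>0. \<forall>f\<in>L2 mu. \<forall>g\<in>L2 mu. \<forall>a b.
        AE x in mu. T t (\<lambda>y. a * f y + b * g y) x = a * T t f x + b * T t g x) \<and>
     (\<forall>f\<in>L2 mu. AE x in mu. T 0 f x = f x) \<and>
     (\<forall>s\<ge>0. \<forall>t\<ge>0. \<forall>f\<in>L2 mu. AE x in mu. T (s + t) f x = T s (T t f) x) \<and>
     (\<forall>t\<ge>0. \<forall>f\<in>L2 mu. L2norm mu (T t f) \<le> L2norm mu f) \<and>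
     (\<forall>t\<ge>0. \<forall>f\<in>L2 mu. \<forall>g\<in>L2 mu.
        (\<integral>x. T t f x * cnj (g x) \<partial>mu) = (\<integral>x. f x * cnj (T t g x) \<partial>mu)) \<and>
     (\<forall>f\<in>L2 mu. ((\<lambda>t. L2norm mu (\<lambda>x. T t f x - f x)) \<longlongrightarrow> 0) (at_right 0))"

text \<open>The graph of L: L f = g iff (T t f - f)/t converges to -g in L^2 as t -> 0+.\<close>
definition op_graph :: "'a measure \<Rightarrow> (real \<Rightarrow> ('a \<Rightarrow> complex) \<Rightarrow> ('a \<Rightarrow> complex))
     \<Rightarrow> ('a \<Rightarrow> complex) \<Rightarrow> ('a \<Rightarrow> complex) \<Rightarrow> bool" where
  "op_graph mu T f g \<longleftrightarrow> f \<in> L2 mu \<and> g \<in> L2 mu \<and>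
     ((\<lambda>t. L2norm mu (\<lambda>x. (T t f x - f x) / complex_of_real t + g x)) \<longlongrightarrow> 0) (at_right 0)"

definition null_space_trivial :: "'a measure \<Rightarrow> (real \<Rightarrow> ('a \<Rightarrow> complex) \<Rightarrow> ('a \<Rightarrow> complex)) \<Rightarrow> bool" where
  "null_space_trivial mu T \<longleftrightarrow>
     (\<forall>f. op_graph mu T f (\<lambda>x. 0) \<longrightarrow> (AE x in mu. f x = 0))"

definition range_dense :: "'a measure \<Rightarrow> (real \<Rightarrow> ('a \<Rightarrow> complex) \<Rightarrow> ('a \<Rightarrow> complex)) \<Rightarrow> bool" where
  "range_dense mu T \<longleftrightarrow>
     (\<forall>h\<in>L2 mu. \<forall>\<epsilon>>0. \<exists>f g. op_graph mu T f g \<and> L2norm mu (\<lambda>x. g x - h x) < \<epsilon>)"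

definition rho :: "real \<Rightarrow> real \<Rightarrow> real \<Rightarrow> real" where
  "rho \<beta>1 \<beta>2 t = (if t < 1 then t powr \<beta>1 else t powr \<beta>2)"

text \<open>DG condition: the operator norm from L^p0 to L^p0' of 1_{B(x,t)} exp(-rho(t) L) 1_{B(y,t)}
is bounded, tested on the dense class of L^2 functions (restricted to B(y,t)).\<close>
definition DG :: "('a::metric_space) measure \<Rightarrow> (real \<Rightarrow> ('a \<Rightarrow> complex) \<Rightarrow> ('a \<Rightarrow> complex))
     \<Rightarrow> real \<Rightarrow> real \<Rightarrow> real \<Rightarrow> bool" where
  "DG mu T p0 \<beta>1 \<beta>2 \<longleftrightarrow> (\<exists>C c. c > 0 \<and> (\<forall>x y t. \<forall>f\<in>L2 mu. t > 0 \<longrightarrow>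
     (let \<beta> = (if t < 1 then \<beta>1 else \<beta>2);
          f' = (\<lambda>z. indicator (ball y t) z * f z) in
      Lnorm_le mu (conj_exp p0)
        (\<lambda>z. indicator (ball x t) z * T (rho \<beta>1 \<beta>2 t) f' z)
        (C / V mu x t powr (1 / p0 - (1 - 1 / p0))
           * exp (- c * (dist x y / t) powr (\<beta> / (\<beta> - 1))) * Lpnorm mu p0 f'))))"

end

theory Submission
  imports Defs
begin

lemma borel_measurable_cnj[measurable]:
  "f \<in> borel_measurable M \<Longrightarrow> (\<lambda>x. cnj (f x)) \<in> borel_measurable M"
  by (rule borel_measurable_continuous_on[where f=cnj])
     (auto intro: linear_continuous_on bounded_linear_cnj)

lemma L2_D: "f \<in> L2 M \<Longrightarrow> f \<in> borel_measurable M"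
  "f \<in> L2 M \<Longrightarrow> integrable M (\<lambda>x. (cmod (f x))\<^sup>2)"
  by (auto simp: L2_def)

lemma L2_I: "f \<in> borel_measurable M \<Longrightarrow> integrable M (\<lambda>x. (cmod (f x))\<^sup>2) \<Longrightarrow> f \<in> L2 M"
  by (auto simp: L2_def)

lemma L2norm_nonneg: "L2norm M f \<ge> 0"
  unfolding L2norm_def by (intro real_sqrt_ge_zero integral_nonneg_AE) auto

lemma L2norm_sq: "(L2norm M f)\<^sup>2 = (\<integral>x. (cmod (f x))\<^sup>2 \<partial>M)"
  unfolding L2norm_def by (simp add: integral_nonneg_AE)

lemma L2_bound:
  assumes "f \<in> L2 M" "g \<in> borel_measurable M" "AE x in M. cmod (g x) \<le> cmod (f x)"
  shows "g \<in> L2 M"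
proof (rule L2_I[OF assms(2)])
  show "integrable M (\<lambda>x. (cmod (g x))\<^sup>2)"
    apply (rule Bochner_Integration.integrable_bound[OF L2_D(2)[OF assms(1)]])
    using assms(2) apply measurable
    using assms(3) by (auto intro!: power_mono)
qed

lemma L2_add: assumes "f \<in> L2 M" "g \<in> L2 M" shows "(\<lambda>x. f x + g x) \<in> L2 M"
proof (rule L2_I)
  show "(\<lambda>x. f x + g x) \<in> borel_measurable M" using L2_D(1)[OF assms(1)] L2_D(1)[OF assms(2)] by measurable
  have "integrable M (\<lambda>x. 2 * (cmod (f x))\<^sup>2 + 2 * (cmod (g x))\<^sup>2)"
    using L2_D(2)[OF assms(1)] L2_D(2)[OF assms(2)] by auto
  then show "integrable M (\<lambda>x. (cmod (f x + g x))\<^sup>2)"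
  proof (rule Bochner_Integration.integrable_bound)
    show "(\<lambda>x. (cmod (f x + g x))\<^sup>2) \<in> borel_measurable M"
      using L2_D(1)[OF assms(1)] L2_D(1)[OF assms(2)] by measurable
    show "AE x in M. norm ((cmod (f x + g x))\<^sup>2) \<le> norm (2 * (cmod (f x))\<^sup>2 + 2 * (cmod (g x))\<^sup>2)"
    proof (rule AE_I2)
      fix x
      have "cmod (f x + g x) \<le> cmod (f x) + cmod (g x)" by (rule norm_triangle_ineq)
      then have "(cmod (f x + g x))\<^sup>2 \<le> (cmod (f x) + cmod (g x))\<^sup>2" by (intro power_mono) auto
      also have "\<dots> \<le> 2 * (cmod (f x))\<^sup>2 + 2 * (cmod (g x))\<^sup>2"
        using zero_le_power2[of "cmod (f x) - cmod (g x)"] by (simp add: power2_eq_square algebra_simps)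
      finally show "norm ((cmod (f x + g x))\<^sup>2) \<le> norm (2 * (cmod (f x))\<^sup>2 + 2 * (cmod (g x))\<^sup>2)" by simp
    qed
  qed
qed

lemma L2_cmult: assumes "f \<in> L2 M" shows "(\<lambda>x. c * f x) \<in> L2 M"
proof (rule L2_I)
  show "(\<lambda>x. c * f x) \<in> borel_measurable M" using L2_D(1)[OF assms] by measurable
  show "integrable M (\<lambda>x. (cmod (c * f x))\<^sup>2)"
    using integrable_mult_right[OF L2_D(2)[OF assms], of "(cmod c)\<^sup>2"]
    by (simp add: norm_mult power_mult_distrib)
qed

lemma L2_zero: "(\<lambda>x. 0) \<in> L2 M"
  by (rule L2_I) auto

lemma L2_uminus: assumes "f \<in> L2 M" shows "(\<lambda>x. - f x) \<in> L2 M"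
  using L2_cmult[OF assms, of "-1"] by simp

lemma L2_diff: assumes "f \<in> L2 M" "g \<in> L2 M" shows "(\<lambda>x. f x - g x) \<in> L2 M"
  using L2_add[OF assms(1) L2_uminus[OF assms(2)]] by simp

lemma L2_divide: assumes "f \<in> L2 M" shows "(\<lambda>x. f x / c) \<in> L2 M"
  using L2_cmult[OF assms, of "inverse c"] by (simp add: field_simps)

lemma L2_sum: assumes "\<And>i. i \<in> I \<Longrightarrow> f i \<in> L2 M" shows "(\<lambda>x. \<Sum>i\<in>I. f i x) \<in> L2 M"
  using assms
proof (induction I rule: infinite_finite_induct)
  case (insert i I) then show ?case by (simp add: L2_add)
qed (auto simp: L2_zero)

lemma L2norm_cmult: "L2norm M (\<lambda>x. c * f x) = cmod c * L2norm M f"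
proof -
  have "(\<integral>x. (cmod (c * f x))\<^sup>2 \<partial>M) = (cmod c)\<^sup>2 * (\<integral>x. (cmod (f x))\<^sup>2 \<partial>M)"
    by (simp add: norm_mult power_mult_distrib)
  then show ?thesis unfolding L2norm_def by (simp add: real_sqrt_mult)
qed

lemma L2norm_uminus: "L2norm M (\<lambda>x. - f x) = L2norm M f"
  using L2norm_cmult[of M "-1" f] by simp

lemma L2norm_divide: "L2norm M (\<lambda>x. f x / c) = L2norm M f / cmod c"
  using L2norm_cmult[of M "1 / c" f] by (simp add: norm_divide)

lemma L2norm_cong_AE: assumes "f \<in> borel_measurable M" "g \<in> borel_measurable M" "AE x in M. f x = g x"
  shows "L2norm M f = L2norm M g"
proof -
  have "(\<integral>x. (cmod (f x))\<^sup>2 \<partial>M) = (\<integral>x. (cmod (g x))\<^sup>2 \<partial>M)"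
    apply (rule integral_cong_AE)
    using assms by auto
  then show ?thesis by (simp add: L2norm_def)
qed

lemma L2norm_eq0: assumes "f \<in> L2 M" "L2norm M f = 0" shows "AE x in M. f x = 0"
proof -
  have "(\<integral>x. (cmod (f x))\<^sup>2 \<partial>M) = 0" using assms(2) L2norm_sq[of M f] by simp
  then have "AE x in M. (cmod (f x))\<^sup>2 = 0"
    using integral_nonneg_eq_0_iff_AE[OF L2_D(2)[OF assms(1)]] by auto
  then show ?thesis by auto
qed

lemma L2norm_AE0: assumes "f \<in> borel_measurable M" "AE x in M. f x = 0" shows "L2norm M f = 0"
  using L2norm_cong_AE[OF assms(1) _ assms(2)] by (simp add: L2norm_def)

lemma CS_real:
  assumes "f \<in> L2 M" "g \<in> L2 M"
  shows "integrable M (\<lambda>x. cmod (f x) * cmod (g x))"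
    and "(\<integral>x. cmod (f x) * cmod (g x) \<partial>M) \<le> L2norm M f * L2norm M g"
proof -
  have mf: "f \<in> borel_measurable M" and mg: "g \<in> borel_measurable M" using assms by (auto dest: L2_D)
  have ii: "integrable M (\<lambda>x. (cmod (f x))\<^sup>2 + (cmod (g x))\<^sup>2)"
    using L2_D(2)[OF assms(1)] L2_D(2)[OF assms(2)] by auto
  show int: "integrable M (\<lambda>x. cmod (f x) * cmod (g x))"
  proof (rule Bochner_Integration.integrable_bound[OF ii])
    show "(\<lambda>x. cmod (f x) * cmod (g x)) \<in> borel_measurable M" using mf mg by measurable
    show "AE x in M. norm (cmod (f x) * cmod (g x)) \<le> norm ((cmod (f x))\<^sup>2 + (cmod (g x))\<^sup>2)"
    proof (rule AE_I2)
      fix x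
      have "2 * (cmod (f x) * cmod (g x)) \<le> (cmod (f x))\<^sup>2 + (cmod (g x))\<^sup>2"
        using sum_squares_bound[of "cmod (f x)" "cmod (g x)"] by (simp add: power2_eq_square algebra_simps)
      moreover have "norm (cmod (f x) * cmod (g x)) = cmod (f x) * cmod (g x)" by simp
      moreover have "norm ((cmod (f x))\<^sup>2 + (cmod (g x))\<^sup>2) = (cmod (f x))\<^sup>2 + (cmod (g x))\<^sup>2" by simp
      moreover have "0 \<le> cmod (f x) * cmod (g x)" by simp
      ultimately show "norm (cmod (f x) * cmod (g x)) \<le> norm ((cmod (f x))\<^sup>2 + (cmod (g x))\<^sup>2)"
        by linarith
    qed
  qed
  have m1: "(\<lambda>x. ennreal (cmod (f x))) \<in> borel_measurable M" using mf by measurable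
  have m2: "(\<lambda>x. ennreal (cmod (g x))) \<in> borel_measurable M" using mg by measurable
  have "(\<integral>\<^sup>+x. ennreal (cmod (f x)) * ennreal (cmod (g x)) \<partial>M)\<^sup>2
     \<le> (\<integral>\<^sup>+x. ennreal (cmod (f x)) ^ 2 \<partial>M) * (\<integral>\<^sup>+x. ennreal (cmod (g x)) ^ 2 \<partial>M)"
    by (rule Cauchy_Schwarz_nn_integral[OF m1 m2])
  also have "(\<integral>\<^sup>+x. ennreal (cmod (f x)) ^ 2 \<partial>M) = ennreal (\<integral>x. (cmod (f x))\<^sup>2 \<partial>M)"
    using nn_integral_eq_integral[OF L2_D(2)[OF assms(1)]] by (simp add: ennreal_power)
  also have "(\<integral>\<^sup>+x. ennreal (cmod (g x)) ^ 2 \<partial>M) = ennreal (\<integral>x. (cmod (g x))\<^sup>2 \<partial>M)"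
    using nn_integral_eq_integral[OF L2_D(2)[OF assms(2)]] by (simp add: ennreal_power)
  also have "(\<integral>\<^sup>+x. ennreal (cmod (f x)) * ennreal (cmod (g x)) \<partial>M) = ennreal (\<integral>x. cmod (f x) * cmod (g x) \<partial>M)"
    using nn_integral_eq_integral[OF int] by (simp add: ennreal_mult)
  finally have le: "ennreal (\<integral>x. cmod (f x) * cmod (g x) \<partial>M) ^ 2 \<le> ennreal (\<integral>x. (cmod (f x))\<^sup>2 \<partial>M) * ennreal (\<integral>x. (cmod (g x))\<^sup>2 \<partial>M)" .
  have a0: "0 \<le> (\<integral>x. cmod (f x) * cmod (g x) \<partial>M)" by (intro integral_nonneg_AE) auto
  have b0: "0 \<le> (\<integral>x. (cmod (f x))\<^sup>2 \<partial>M)" by (intro integral_nonneg_AE) auto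
  have c0: "0 \<le> (\<integral>x. (cmod (g x))\<^sup>2 \<partial>M)" by (intro integral_nonneg_AE) auto
  have "ennreal ((\<integral>x. cmod (f x) * cmod (g x) \<partial>M)\<^sup>2) \<le> ennreal ((\<integral>x. (cmod (f x))\<^sup>2 \<partial>M) * (\<integral>x. (cmod (g x))\<^sup>2 \<partial>M))"
    using le by (simp only: ennreal_power[OF a0] ennreal_mult[OF b0 c0])
  then have "(\<integral>x. cmod (f x) * cmod (g x) \<partial>M)\<^sup>2 \<le> (\<integral>x. (cmod (f x))\<^sup>2 \<partial>M) * (\<integral>x. (cmod (g x))\<^sup>2 \<partial>M)"
    using b0 c0 by (subst (asm) ennreal_le_iff) auto
  also have "\<dots> = (L2norm M f * L2norm M g)\<^sup>2" by (simp add: L2norm_sq power_mult_distrib)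
  finally show "(\<integral>x. cmod (f x) * cmod (g x) \<partial>M) \<le> L2norm M f * L2norm M g"
    using L2norm_nonneg[of M f] L2norm_nonneg[of M g]
    by (meson mult_nonneg_nonneg power2_le_imp_le)
qed

lemma CS:
  assumes "f \<in> L2 M" "g \<in> L2 M"
  shows "integrable M (\<lambda>x. f x * cnj (g x))"
    and "cmod (\<integral>x. f x * cnj (g x) \<partial>M) \<le> L2norm M f * L2norm M g"
proof -
  have mf: "f \<in> borel_measurable M" and mg: "g \<in> borel_measurable M" using assms by (auto dest: L2_D)
  show int: "integrable M (\<lambda>x. f x * cnj (g x))"
  proof (rule Bochner_Integration.integrable_bound[OF CS_real(1)[OF assms]])
    show "(\<lambda>x. f x * cnj (g x)) \<in> borel_measurable M" using mf mg by measurable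
  qed (auto simp: norm_mult)
  have "cmod (\<integral>x. f x * cnj (g x) \<partial>M) \<le> (\<integral>x. cmod (f x * cnj (g x)) \<partial>M)"
    by (rule integral_norm_bound)
  also have "\<dots> = (\<integral>x. cmod (f x) * cmod (g x) \<partial>M)" by (simp add: norm_mult)
  finally show "cmod (\<integral>x. f x * cnj (g x) \<partial>M) \<le> L2norm M f * L2norm M g"
    using CS_real(2)[OF assms] by linarith
qed

lemma minkowski:
  assumes "f \<in> L2 M" "g \<in> L2 M"
  shows "L2norm M (\<lambda>x. f x + g x) \<le> L2norm M f + L2norm M g"
proof -
  have mf: "f \<in> borel_measurable M" and mg: "g \<in> borel_measurable M" using assms by (auto dest: L2_D)
  have i1: "integrable M (\<lambda>x. (cmod (f x + g x))\<^sup>2)" using L2_D(2)[OF L2_add[OF assms]] .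
  have i2: "integrable M (\<lambda>x. (cmod (f x))\<^sup>2 + 2 * (cmod (f x) * cmod (g x)) + (cmod (g x))\<^sup>2)"
    using L2_D(2)[OF assms(1)] L2_D(2)[OF assms(2)] CS_real(1)[OF assms] by auto
  have "(L2norm M (\<lambda>x. f x + g x))\<^sup>2 = (\<integral>x. (cmod (f x + g x))\<^sup>2 \<partial>M)" by (rule L2norm_sq)
  also have "\<dots> \<le> (\<integral>x. (cmod (f x))\<^sup>2 + 2 * (cmod (f x) * cmod (g x)) + (cmod (g x))\<^sup>2 \<partial>M)"
  proof (rule integral_mono[OF i1 i2])
    fix x
    have "cmod (f x + g x) \<le> cmod (f x) + cmod (g x)" by (rule norm_triangle_ineq)
    then have "(cmod (f x + g x))\<^sup>2 \<le> (cmod (f x) + cmod (g x))\<^sup>2" by (intro power_mono) auto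
    then show "(cmod (f x + g x))\<^sup>2 \<le> (cmod (f x))\<^sup>2 + 2 * (cmod (f x) * cmod (g x)) + (cmod (g x))\<^sup>2"
      by (simp add: power2_sum)
  qed
  also have "\<dots> = (L2norm M f)\<^sup>2 + 2 * (\<integral>x. cmod (f x) * cmod (g x) \<partial>M) + (L2norm M g)\<^sup>2"
    using L2_D(2)[OF assms(1)] L2_D(2)[OF assms(2)] CS_real(1)[OF assms] by (simp add: L2norm_sq)
  also have "\<dots> \<le> (L2norm M f)\<^sup>2 + 2 * (L2norm M f * L2norm M g) + (L2norm M g)\<^sup>2"
    using CS_real(2)[OF assms] by simp
  also have "\<dots> = (L2norm M f + L2norm M g)\<^sup>2" by (simp add: power2_sum)
  finally show ?thesis
    using L2norm_nonneg[of M f] L2norm_nonneg[of M g] by (meson add_nonneg_nonneg power2_le_imp_le)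
qed

lemma minkowski_diff:
  assumes "f \<in> L2 M" "g \<in> L2 M" "h \<in> L2 M"
  shows "L2norm M (\<lambda>x. f x - h x) \<le> L2norm M (\<lambda>x. f x - g x) + L2norm M (\<lambda>x. g x - h x)"
  using minkowski[OF L2_diff[OF assms(1,2)] L2_diff[OF assms(2,3)]] by simp

lemma L2norm_commute: "L2norm M (\<lambda>x. f x - g x) = L2norm M (\<lambda>x. g x - f x)"
  using L2norm_uminus[of M "\<lambda>x. f x - g x"] by simp


lemma nnL2:
  assumes "h \<in> borel_measurable M" "(\<integral>\<^sup>+x. ennreal ((cmod (h x))\<^sup>2) \<partial>M) \<le> ennreal B" "0 \<le> B"
  shows "h \<in> L2 M" "L2norm M h \<le> sqrt B"
proof -
  have int: "integrable M (\<lambda>x. (cmod (h x))\<^sup>2)"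
    unfolding integrable_iff_bounded using assms(1,2) by (auto simp: top.not_eq_extremum order.strict_trans1)
  then show "h \<in> L2 M" using assms(1) by (rule L2_I[rotated])
  have e: "ennreal (\<integral>x. (cmod (h x))\<^sup>2 \<partial>M) = (\<integral>\<^sup>+x. ennreal ((cmod (h x))\<^sup>2) \<partial>M)"
    by (rule nn_integral_eq_integral[OF int, symmetric]) auto
  have "ennreal (\<integral>x. (cmod (h x))\<^sup>2 \<partial>M) \<le> ennreal B" by (subst e) (rule assms(2))
  then have "(\<integral>x. (cmod (h x))\<^sup>2 \<partial>M) \<le> B" using assms(3) by simp
  then show "L2norm M h \<le> sqrt B" unfolding L2norm_def by simp
qed

lemma L2_nn:
  assumes "h \<in> L2 M"
  shows "(\<integral>\<^sup>+x. ennreal ((cmod (h x))\<^sup>2) \<partial>M) = ennreal ((L2norm M h)\<^sup>2)"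
  unfolding L2norm_sq by (rule nn_integral_eq_integral[OF L2_D(2)[OF assms]]) auto

lemma L2norm_sum:
  assumes "finite I" "\<And>i. i \<in> I \<Longrightarrow> f i \<in> L2 M"
  shows "L2norm M (\<lambda>x. \<Sum>i\<in>I. f i x) \<le> (\<Sum>i\<in>I. L2norm M (f i))"
  using assms
proof (induction I rule: finite_induct)
  case empty then show ?case by (simp add: L2norm_def)
next
  case (insert i I)
  have "L2norm M (\<lambda>x. \<Sum>i\<in>insert i I. f i x) = L2norm M (\<lambda>x. f i x + (\<Sum>i\<in>I. f i x))"
    using insert by simp
  also have "\<dots> \<le> L2norm M (f i) + L2norm M (\<lambda>x. \<Sum>i\<in>I. f i x)"
    using minkowski[of "f i" M "\<lambda>x. \<Sum>i\<in>I. f i x"] insert L2_sum[of I f M] by auto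
  also have "\<dots> \<le> L2norm M (f i) + (\<Sum>i\<in>I. L2norm M (f i))" using insert by auto
  finally show ?case using insert by simp
qed

lemma L2norm_ofreal_cmod: "L2norm M (\<lambda>x. complex_of_real (cmod (h x))) = L2norm M h"
  by (simp add: L2norm_def)

lemma L2_ofreal_cmod: "h \<in> L2 M \<Longrightarrow> (\<lambda>x. complex_of_real (cmod (h x))) \<in> L2 M"
  by (rule L2_bound[of h]) (auto dest: L2_D)

lemma L2_complete:
  fixes f :: "nat \<Rightarrow> 'a \<Rightarrow> complex"
  assumes L2: "\<And>n. f n \<in> L2 M"
    and cauchy: "\<And>e. e > 0 \<Longrightarrow> \<exists>N. \<forall>m\<ge>N. \<forall>n\<ge>N. L2norm M (\<lambda>x. f m x - f n x) < e"
  shows "\<exists>F\<in>L2 M. \<forall>e>0. \<exists>N. \<forall>n\<ge>N. L2norm M (\<lambda>x. F x - f n x) < e"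
proof -
  have "\<forall>k. \<exists>N. \<forall>m\<ge>N. \<forall>n\<ge>N. L2norm M (\<lambda>x. f m x - f n x) < (1/2::real)^k"
    using cauchy by simp
  then obtain Nf where Nf: "\<And>k m n. m \<ge> Nf k \<Longrightarrow> n \<ge> Nf k \<Longrightarrow> L2norm M (\<lambda>x. f m x - f n x) < (1/2)^k"
    by metis
  define r where "r = rec_nat (Nf 0) (\<lambda>k rk. max (Nf (Suc k)) (Suc rk))"
  have r0: "r 0 = Nf 0" and rS: "\<And>k. r (Suc k) = max (Nf (Suc k)) (Suc (r k))" by (simp_all add: r_def)
  have rN: "Nf k \<le> r k" for k by (cases k) (auto simp: r0 rS)
  have "strict_mono r" unfolding strict_mono_Suc_iff by (auto simp: rS)
  then have rmono: "k \<le> n \<Longrightarrow> r k \<le> r n" for k n by (simp add: strict_mono_less_eq)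
  define g where "g k = f (r k)" for k
  have gL2: "g k \<in> L2 M" for k by (simp add: g_def L2)
  have gmeas[measurable]: "g k \<in> borel_measurable M" for k using gL2 by (rule L2_D)
  have gc: "L2norm M (\<lambda>x. g m x - g n x) < (1/2)^k" if "k \<le> m" "k \<le> n" for k m n
    unfolding g_def using Nf[of k] rN[of k] rmono[OF that(1)] rmono[OF that(2)] by auto
  define d where "d k x = g (Suc k) x - g k x" for k x
  have dL2: "d k \<in> L2 M" for k unfolding d_def[abs_def] by (intro L2_diff gL2)
  have dn: "L2norm M (d k) < (1/2)^k" for k unfolding d_def[abs_def] by (rule gc) auto
  define D where "D n x = (\<Sum>k<n. cmod (d k x))" for n x
  have Dmeas[measurable]: "D n \<in> borel_measurable M" for n
    unfolding D_def[abs_def] d_def[abs_def] by measurable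
  have DL2: "(\<lambda>x. complex_of_real (D n x)) \<in> L2 M" for n
    unfolding D_def of_real_sum by (intro L2_sum L2_ofreal_cmod dL2)
  have Dn: "L2norm M (\<lambda>x. complex_of_real (D n x)) \<le> 2" for n
  proof -
    have "L2norm M (\<lambda>x. complex_of_real (D n x)) \<le> (\<Sum>k<n. L2norm M (\<lambda>x. complex_of_real (cmod (d k x))))"
      unfolding D_def of_real_sum by (intro L2norm_sum L2_ofreal_cmod dL2) auto
    also have "\<dots> \<le> (\<Sum>k<n. (1/2::real)^k)"
      by (intro sum_mono) (simp add: L2norm_ofreal_cmod dn less_imp_le)
    also have "\<dots> \<le> 2"
      using geometric_sums[of "1/2::real"] sum_le_suminf[of "\<lambda>k. (1/2::real)^k" "{..<n}"]
      by (auto simp: sums_iff)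
    finally show ?thesis .
  qed
  have Dpos: "0 \<le> D n x" for n x unfolding D_def by (auto intro: sum_nonneg)
  define u where "u n x = ennreal ((D n x)\<^sup>2)" for n x
  have umeas[measurable]: "u n \<in> borel_measurable M" for n unfolding u_def[abs_def] by measurable
  have ui: "integral\<^sup>N M (u n) \<le> 4" for n
  proof -
    have "integral\<^sup>N M (u n) = ennreal ((L2norm M (\<lambda>x. complex_of_real (D n x)))\<^sup>2)"
      unfolding u_def using L2_nn[OF DL2[of n]] Dpos by (simp add: abs_of_nonneg)
    also have "\<dots> \<le> ennreal 4"
    proof (rule ennreal_leI)
      have "(L2norm M (\<lambda>x. complex_of_real (D n x)))\<^sup>2 \<le> 2\<^sup>2"
        by (rule power_mono[OF Dn L2norm_nonneg])
      then show "(L2norm M (\<lambda>x. complex_of_real (D n x)))\<^sup>2 \<le> 4" by simp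
    qed
    finally show ?thesis by simp
  qed
  have "(\<integral>\<^sup>+x. liminf (\<lambda>n. u n x) \<partial>M) \<le> liminf (\<lambda>n. integral\<^sup>N M (u n))"
    by (rule nn_integral_liminf) simp
  also have "\<dots> \<le> 4" by (rule Liminf_le) (auto simp: ui)
  finally have "(\<integral>\<^sup>+x. liminf (\<lambda>n. u n x) \<partial>M) \<noteq> \<infinity>" by (auto simp: top_unique)
  then have AEfin: "AE x in M. liminf (\<lambda>n. u n x) \<noteq> \<infinity>"
    by (rule nn_integral_PInf_AE[OF borel_measurable_liminf[OF umeas]])
  have AEconv: "AE x in M. convergent (\<lambda>n. g n x)"
    using AEfin
  proof (rule AE_mp, intro AE_I2 impI)
    fix x assume fin: "liminf (\<lambda>n. u n x) \<noteq> \<infinity>"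
    define L where "L = liminf (\<lambda>n. u n x)"
    have "u m x \<le> L" for m unfolding L_def
    proof (rule Liminf_bounded)
      show "\<forall>\<^sub>F n in sequentially. u m x \<le> u n x"
        unfolding eventually_sequentially u_def
      proof (intro exI allI impI)
        fix n assume "m \<le> n"
        then have "D m x \<le> D n x" unfolding D_def by (intro sum_mono2) auto
        then show "ennreal ((D m x)\<^sup>2) \<le> ennreal ((D n x)\<^sup>2)"
          using Dpos[of m x] by (intro ennreal_leI power_mono) auto
      qed
    qed
    then have "(D m x)\<^sup>2 \<le> enn2real L" for m
    proof -
      have "enn2real (u m x) \<le> enn2real L"
        using \<open>u m x \<le> L\<close> fin unfolding L_def by (intro enn2real_mono) (auto simp: top.not_eq_extremum)
      then show ?thesis unfolding u_def by simp
    qed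
    then have "D m x \<le> sqrt (enn2real L)" for m
      using Dpos[of m x] by (simp add: real_le_rsqrt)
    then have "summable (\<lambda>k. cmod (d k x))"
      by (intro summableI_nonneg_bounded[where x="sqrt (enn2real L)"]) (auto simp: D_def)
    then have "summable (\<lambda>k. d k x)" by (rule summable_norm_cancel)
    then have "(\<lambda>n. \<Sum>k<n. d k x) \<longlonglongrightarrow> suminf (\<lambda>k. d k x)" by (rule summable_LIMSEQ)
    then have "(\<lambda>n. g 0 x + (\<Sum>k<n. d k x)) \<longlonglongrightarrow> g 0 x + suminf (\<lambda>k. d k x)"
      by (intro tendsto_intros)
    moreover have "g 0 x + (\<Sum>k<n. d k x) = g n x" for n
      unfolding d_def using sum_lessThan_telescope[of "\<lambda>k. g k x" n] by simp
    ultimately show "convergent (\<lambda>n. g n x)" unfolding convergent_def by auto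
  qed
  define F where "F x = lim (\<lambda>n. g n x)" for x
  have Fmeas[measurable]: "F \<in> borel_measurable M" unfolding F_def[abs_def] by measurable
  have AElim: "AE x in M. (\<lambda>n. g n x) \<longlonglongrightarrow> F x"
    using AEconv by eventually_elim (simp add: F_def convergent_LIMSEQ_iff)
  have tail: "(\<lambda>x. F x - g n x) \<in> L2 M \<and> L2norm M (\<lambda>x. F x - g n x) \<le> (1/2)^n" for n
  proof -
    have "(\<integral>\<^sup>+x. ennreal ((cmod (F x - g n x))\<^sup>2) \<partial>M)
        = (\<integral>\<^sup>+x. liminf (\<lambda>m. ennreal ((cmod (g m x - g n x))\<^sup>2)) \<partial>M)"
    proof (rule nn_integral_cong_AE)
      show "AE x in M. ennreal ((cmod (F x - g n x))\<^sup>2) = liminf (\<lambda>m. ennreal ((cmod (g m x - g n x))\<^sup>2))"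
        using AElim
      proof eventually_elim
        case (elim x)
        have "(\<lambda>m. ennreal ((cmod (g m x - g n x))\<^sup>2)) \<longlonglongrightarrow> ennreal ((cmod (F x - g n x))\<^sup>2)"
          by (intro tendsto_intros elim)
        then show ?case by (intro lim_imp_Liminf[symmetric]) auto
      qed
    qed
    also have "\<dots> \<le> liminf (\<lambda>m. \<integral>\<^sup>+x. ennreal ((cmod (g m x - g n x))\<^sup>2) \<partial>M)"
      by (rule nn_integral_liminf) measurable
    also have "\<dots> \<le> ennreal (((1/2)^n)\<^sup>2)"
    proof (rule Liminf_le)
      show "\<forall>\<^sub>F m in sequentially. (\<integral>\<^sup>+x. ennreal ((cmod (g m x - g n x))\<^sup>2) \<partial>M) \<le> ennreal (((1/2)^n)\<^sup>2)"
        unfolding eventually_sequentially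
      proof (intro exI allI impI)
        fix m assume "n \<le> m"
        have "(\<integral>\<^sup>+x. ennreal ((cmod (g m x - g n x))\<^sup>2) \<partial>M) = ennreal ((L2norm M (\<lambda>x. g m x - g n x))\<^sup>2)"
          by (intro L2_nn L2_diff gL2)
        also have "\<dots> \<le> ennreal (((1/2)^n)\<^sup>2)"
          using gc[of n m n] \<open>n \<le> m\<close> L2norm_nonneg[of M "\<lambda>x. g m x - g n x"]
          by (intro ennreal_leI power_mono) auto
        finally show "(\<integral>\<^sup>+x. ennreal ((cmod (g m x - g n x))\<^sup>2) \<partial>M) \<le> ennreal (((1/2)^n)\<^sup>2)" .
      qed
    qed simp
    finally have *: "(\<integral>\<^sup>+x. ennreal ((cmod (F x - g n x))\<^sup>2) \<partial>M) \<le> ennreal (((1/2)^n)\<^sup>2)" .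
    have m: "(\<lambda>x. F x - g n x) \<in> borel_measurable M" by measurable
    show ?thesis using nnL2[OF m *] by simp
  qed
  have FL2: "F \<in> L2 M" using L2_add[OF conjunct1[OF tail[of 0]] gL2[of 0]] by simp
  show ?thesis
  proof (intro bexI[OF _ FL2] allI impI)
    fix e :: real assume "e > 0"
    then obtain k where k: "(1/2::real)^k < e/2" using real_arch_pow_inv[of "e/2" "1/2"] by auto
    show "\<exists>N. \<forall>n\<ge>N. L2norm M (\<lambda>x. F x - f n x) < e"
    proof (intro exI allI impI)
      fix n assume n: "n \<ge> r k"
      have "L2norm M (\<lambda>x. F x - f n x) \<le> L2norm M (\<lambda>x. F x - g k x) + L2norm M (\<lambda>x. g k x - f n x)"
        by (rule minkowski_diff[OF FL2 gL2 L2])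
      also have "L2norm M (\<lambda>x. g k x - f n x) < (1/2)^k"
        unfolding g_def using Nf[of k "r k" n] rN[of k] n by auto
      finally show "L2norm M (\<lambda>x. F x - f n x) < e" using tail[of k] k by linarith
    qed
  qed
qed


locale hs =
  fixes M :: "'a measure" and T :: "real \<Rightarrow> ('a \<Rightarrow> complex) \<Rightarrow> ('a \<Rightarrow> complex)"
  assumes hsg: "heat_semigroup M T"
begin

lemma L2T: "t \<ge> 0 \<Longrightarrow> f \<in> L2 M \<Longrightarrow> T t f \<in> L2 M"
  using hsg[unfolded heat_semigroup_def, THEN conjunct1] by simp

lemma measT: "t \<ge> 0 \<Longrightarrow> f \<in> L2 M \<Longrightarrow> T t f \<in> borel_measurable M"
  using L2T by (rule L2_D)

lemma Tcong: "t \<ge> 0 \<Longrightarrow> f \<in> L2 M \<Longrightarrow> g \<in> L2 M \<Longrightarrow> (AE x in M. f x = g x) \<Longrightarrow> AE x in M. T t f x = T t g x"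
  using hsg[unfolded heat_semigroup_def, THEN conjunct2, THEN conjunct1] by simp

lemma Tlin: "t \<ge> 0 \<Longrightarrow> f \<in> L2 M \<Longrightarrow> g \<in> L2 M \<Longrightarrow>
   AE x in M. T t (\<lambda>y. a * f y + b * g y) x = a * T t f x + b * T t g x"
  using hsg[unfolded heat_semigroup_def, THEN conjunct2, THEN conjunct2, THEN conjunct1] by simp

lemma T0: "f \<in> L2 M \<Longrightarrow> AE x in M. T 0 f x = f x"
  using hsg[unfolded heat_semigroup_def, THEN conjunct2, THEN conjunct2, THEN conjunct2, THEN conjunct1] by simp

lemma Tsemi: "s \<ge> 0 \<Longrightarrow> t \<ge> 0 \<Longrightarrow> f \<in> L2 M \<Longrightarrow> AE x in M. T (s + t) f x = T s (T t f) x"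
  using hsg[unfolded heat_semigroup_def, THEN conjunct2, THEN conjunct2, THEN conjunct2, THEN conjunct2, THEN conjunct1] by simp

lemma Tcontr: "t \<ge> 0 \<Longrightarrow> f \<in> L2 M \<Longrightarrow> L2norm M (T t f) \<le> L2norm M f"
  using hsg[unfolded heat_semigroup_def, THEN conjunct2, THEN conjunct2, THEN conjunct2, THEN conjunct2, THEN conjunct2, THEN conjunct1] by simp

lemma Tsa: "t \<ge> 0 \<Longrightarrow> f \<in> L2 M \<Longrightarrow> g \<in> L2 M \<Longrightarrow>
   (\<integral>x. T t f x * cnj (g x) \<partial>M) = (\<integral>x. f x * cnj (T t g x) \<partial>M)"
  using hsg[unfolded heat_semigroup_def, THEN conjunct2, THEN conjunct2, THEN conjunct2, THEN conjunct2, THEN conjunct2, THEN conjunct2, THEN conjunct1] by simp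

lemma Tcont: "f \<in> L2 M \<Longrightarrow> ((\<lambda>t. L2norm M (\<lambda>x. T t f x - f x)) \<longlongrightarrow> 0) (at_right 0)"
  using hsg[unfolded heat_semigroup_def, THEN conjunct2, THEN conjunct2, THEN conjunct2, THEN conjunct2, THEN conjunct2, THEN conjunct2, THEN conjunct2] by simp

lemma Tzero: "t \<ge> 0 \<Longrightarrow> AE x in M. T t (\<lambda>y. 0) x = 0"
  using Tlin[OF _ L2_zero L2_zero, of t 0 0] by simp

lemma Tdiff: "t \<ge> 0 \<Longrightarrow> f \<in> L2 M \<Longrightarrow> g \<in> L2 M \<Longrightarrow>
   AE x in M. T t (\<lambda>y. f y - g y) x = T t f x - T t g x"
  using Tlin[of t f g 1 "-1"] by simp

lemma Tadd: "t \<ge> 0 \<Longrightarrow> f \<in> L2 M \<Longrightarrow> g \<in> L2 M \<Longrightarrow>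
   AE x in M. T t (\<lambda>y. f y + g y) x = T t f x + T t g x"
  using Tlin[of t f g 1 1] by simp

lemma Tcmult: "t \<ge> 0 \<Longrightarrow> f \<in> L2 M \<Longrightarrow> AE x in M. T t (\<lambda>y. c * f y) x = c * T t f x"
  using Tlin[of t f f c 0] by simp

lemma Tsum:
  assumes "t \<ge> 0" "finite I" "\<And>i. i \<in> I \<Longrightarrow> f i \<in> L2 M"
  shows "AE x in M. T t (\<lambda>y. \<Sum>i\<in>I. c i * f i y) x = (\<Sum>i\<in>I. c i * T t (f i) x)"
  using assms(2,3)
proof (induction I rule: finite_induct)
  case empty then show ?case using Tzero[OF assms(1)] by simp
next
  case (insert j I)
  have L1: "(\<lambda>y. c j * f j y) \<in> L2 M" using insert by (intro L2_cmult) auto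
  have L2s: "(\<lambda>y. \<Sum>i\<in>I. c i * f i y) \<in> L2 M" using insert by (intro L2_sum L2_cmult) auto
  have "AE x in M. T t (\<lambda>y. c j * f j y + (\<Sum>i\<in>I. c i * f i y)) x
        = T t (\<lambda>y. c j * f j y) x + T t (\<lambda>y. \<Sum>i\<in>I. c i * f i y) x"
    by (rule Tadd[OF assms(1) L1 L2s])
  moreover have "AE x in M. T t (\<lambda>y. c j * f j y) x = c j * T t (f j) x"
    using insert by (intro Tcmult assms(1)) auto
  moreover have "AE x in M. T t (\<lambda>y. \<Sum>i\<in>I. c i * f i y) x = (\<Sum>i\<in>I. c i * T t (f i) x)"
    using insert by auto
  ultimately show ?case by eventually_elim (simp add: insert.hyps)
qed

lemma Tcontr_diff:
  assumes "t \<ge> 0" "f \<in> L2 M" "g \<in> L2 M"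
  shows "L2norm M (\<lambda>x. T t f x - T t g x) \<le> L2norm M (\<lambda>x. f x - g x)"
proof -
  have fg: "(\<lambda>y. f y - g y) \<in> L2 M" using assms by (intro L2_diff)
  have "L2norm M (\<lambda>x. T t f x - T t g x) = L2norm M (T t (\<lambda>y. f y - g y))"
    apply (rule L2norm_cong_AE[OF L2_D(1)[OF L2_diff[OF L2T[OF assms(1,2)] L2T[OF assms(1,3)]]] measT[OF assms(1) fg]])
    using Tdiff[OF assms] by eventually_elim simp
  also have "\<dots> \<le> L2norm M (\<lambda>x. f x - g x)" by (rule Tcontr[OF assms(1) fg])
  finally show ?thesis .
qed

lemma Tshift:
  assumes "a \<ge> 0" "v \<ge> 0" "h \<in> L2 M"
  shows "L2norm M (\<lambda>x. T (a + v) h x - T a h x) \<le> L2norm M (\<lambda>x. T v h x - h x)"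
proof -
  have av: "a + v \<ge> 0" using assms by simp
  have "L2norm M (\<lambda>x. T (a + v) h x - T a h x) = L2norm M (\<lambda>x. T a (T v h) x - T a h x)"
  proof (rule L2norm_cong_AE[OF L2_D(1)[OF L2_diff[OF L2T[OF av assms(3)] L2T[OF assms(1,3)]]]
       L2_D(1)[OF L2_diff[OF L2T[OF assms(1) L2T[OF assms(2,3)]] L2T[OF assms(1,3)]]]])
    show "AE x in M. T (a + v) h x - T a h x = T a (T v h) x - T a h x"
      using Tsemi[OF assms] by eventually_elim simp
  qed
  also have "\<dots> \<le> L2norm M (\<lambda>x. T v h x - h x)"
    by (rule Tcontr_diff[OF assms(1) L2T[OF assms(2,3)] assms(3)])
  finally show ?thesis .
qed

lemma Tmod:
  assumes "h \<in> L2 M" "e > 0"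
  shows "\<exists>d>0. \<forall>v. 0 \<le> v \<longrightarrow> v < d \<longrightarrow> L2norm M (\<lambda>x. T v h x - h x) < e"
proof -
  have "\<forall>\<^sub>F t in at_right 0. L2norm M (\<lambda>x. T t h x - h x) < e"
    using order_tendstoD(2)[OF Tcont[OF assms(1)] assms(2)] .
  then obtain d where d: "d > 0" "\<And>t. 0 < t \<Longrightarrow> t < d \<Longrightarrow> L2norm M (\<lambda>x. T t h x - h x) < e"
    unfolding eventually_at_right_field by auto
  have z: "L2norm M (\<lambda>x. T 0 h x - h x) = 0"
    apply (rule L2norm_AE0[OF L2_D(1)[OF L2_diff[OF L2T[of 0 h] assms(1)]]])
    using assms(1) T0[OF assms(1)] by auto
  show ?thesis
  proof (intro exI[of _ d] conjI allI impI)
    fix v :: real assume "0 \<le> v" "v < d"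
    then show "L2norm M (\<lambda>x. T v h x - h x) < e"
      using d z assms(2) by (cases "v = 0") auto
  qed (rule d)
qed

end

lemma ip_cong2:
  assumes "f \<in> L2 M" "g \<in> L2 M" "h \<in> L2 M" "AE x in M. g x = h x"
  shows "(\<integral>x. f x * cnj (g x) \<partial>M) = (\<integral>x. f x * cnj (h x) \<partial>M)"
proof (rule integral_cong_AE)
  show "(\<lambda>x. f x * cnj (g x)) \<in> borel_measurable M" using L2_D(1)[OF assms(1)] L2_D(1)[OF assms(2)] by measurable
  show "(\<lambda>x. f x * cnj (h x)) \<in> borel_measurable M" using L2_D(1)[OF assms(1)] L2_D(1)[OF assms(3)] by measurable
  show "AE x in M. f x * cnj (g x) = f x * cnj (h x)" using assms(4) by eventually_elim simp
qed

lemma ip_cong1: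
  assumes "f \<in> L2 M" "g \<in> L2 M" "h \<in> L2 M" "AE x in M. g x = h x"
  shows "(\<integral>x. g x * cnj (f x) \<partial>M) = (\<integral>x. h x * cnj (f x) \<partial>M)"
proof (rule integral_cong_AE)
  show "(\<lambda>x. g x * cnj (f x)) \<in> borel_measurable M" using L2_D(1)[OF assms(1)] L2_D(1)[OF assms(2)] by measurable
  show "(\<lambda>x. h x * cnj (f x)) \<in> borel_measurable M" using L2_D(1)[OF assms(1)] L2_D(1)[OF assms(3)] by measurable
  show "AE x in M. g x * cnj (f x) = h x * cnj (f x)" using assms(4) by eventually_elim simp
qed

lemma ip_diff1:
  assumes "f \<in> L2 M" "g \<in> L2 M" "h \<in> L2 M"
  shows "(\<integral>x. (g x - h x) * cnj (f x) \<partial>M) = (\<integral>x. g x * cnj (f x) \<partial>M) - (\<integral>x. h x * cnj (f x) \<partial>M)"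
  using CS(1)[OF assms(2,1)] CS(1)[OF assms(3,1)] by (simp add: algebra_simps)

lemma ip_add1:
  assumes "f \<in> L2 M" "g \<in> L2 M" "h \<in> L2 M"
  shows "(\<integral>x. (g x + h x) * cnj (f x) \<partial>M) = (\<integral>x. g x * cnj (f x) \<partial>M) + (\<integral>x. h x * cnj (f x) \<partial>M)"
  using CS(1)[OF assms(2,1)] CS(1)[OF assms(3,1)] by (simp add: algebra_simps)

lemma eps_zero:
  fixes x c :: real
  assumes "c \<ge> 0" "\<And>e. e > 0 \<Longrightarrow> x \<le> e * c"
  shows "x \<le> 0"
proof (rule ccontr)
  assume "\<not> x \<le> 0"
  then have x: "x > 0" by simp
  have "x \<le> (x / (2 * (c + 1))) * c" using assms(2)[of "x / (2 * (c + 1))"] x assms(1) by simp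
  also have "\<dots> < x" using x assms(1) by (simp add: field_simps add_nonneg_pos mult_nonneg_nonneg)
  finally show False by simp
qed

context hs
begin

lemma opg_inv:
  assumes og: "op_graph M T f (\<lambda>x. 0)" and gL2: "g \<in> L2 M" and s0: "s \<ge> 0"
  shows "(\<integral>x. f x * cnj (g x) \<partial>M) = (\<integral>x. f x * cnj (T s g x) \<partial>M)"
proof -
  have fL2: "f \<in> L2 M" using og by (simp add: op_graph_def)
  have lim: "((\<lambda>t. L2norm M (\<lambda>x. (T t f x - f x) / complex_of_real t + 0)) \<longlongrightarrow> 0) (at_right 0)"
    using og by (simp add: op_graph_def)
  define G where "G t = (\<integral>x. f x * cnj (T t g x) \<partial>M)" for t
  have step: "cmod (G (a + v) - G a) \<le> L2norm M (\<lambda>x. T v f x - f x) * L2norm M g"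
    if a: "a \<ge> 0" and v: "v \<ge> 0" for a v
  proof -
    have TagL2: "T a g \<in> L2 M" using L2T[OF a gL2] .
    have "G (a + v) = (\<integral>x. f x * cnj (T v (T a g) x) \<partial>M)"
      unfolding G_def
    proof (rule ip_cong2[OF fL2])
      show "T (a + v) g \<in> L2 M" using a v gL2 by (intro L2T) auto
      show "T v (T a g) \<in> L2 M" using v TagL2 by (rule L2T)
      show "AE x in M. T (a + v) g x = T v (T a g) x" using Tsemi[OF v a gL2] by (simp add: add.commute)
    qed
    also have "\<dots> = (\<integral>x. T v f x * cnj (T a g x) \<partial>M)"
      by (rule Tsa[OF v fL2 TagL2, symmetric])
    finally have "G (a + v) - G a = (\<integral>x. T v f x * cnj (T a g x) \<partial>M) - (\<integral>x. f x * cnj (T a g x) \<partial>M)"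
      by (simp add: G_def)
    also have "\<dots> = (\<integral>x. (T v f x - f x) * cnj (T a g x) \<partial>M)"
      by (rule ip_diff1[OF TagL2 L2T[OF v fL2] fL2, symmetric])
    finally have "cmod (G (a + v) - G a) \<le> L2norm M (\<lambda>x. T v f x - f x) * L2norm M (T a g)"
      using CS(2)[OF L2_diff[OF L2T[OF v fL2] fL2] TagL2] by simp
    also have "\<dots> \<le> L2norm M (\<lambda>x. T v f x - f x) * L2norm M g"
      by (intro mult_left_mono Tcontr a gL2 L2norm_nonneg)
    finally show ?thesis .
  qed
  have main: "cmod (G s - G 0) \<le> e * (s * L2norm M g)" if e: "e > 0" for e
  proof (cases "s = 0")
    case True then show ?thesis by simp
  next
    case False
    with s0 have sp: "s > 0" by simp
    have "\<forall>\<^sub>F t in at_right 0. L2norm M (\<lambda>x. (T t f x - f x) / complex_of_real t + 0) < e"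
      using order_tendstoD(2)[OF lim e] .
    then obtain d where d: "d > 0" "\<And>t. 0 < t \<Longrightarrow> t < d \<Longrightarrow> L2norm M (\<lambda>x. (T t f x - f x) / complex_of_real t + 0) < e"
      unfolding eventually_at_right_field by auto
    obtain n :: nat where n: "s / d < n" using reals_Archimedean2 by blast
    have npos: "n > 0" using n sp d(1) by (cases n) (auto simp: field_simps)
    define tau where "tau = s / n"
    have tau0: "tau > 0" using sp npos by (simp add: tau_def)
    have taud: "tau < d" using n d(1) npos sp by (simp add: tau_def field_simps)
    have "L2norm M (\<lambda>x. (T tau f x - f x) / complex_of_real tau + 0) < e" using d(2)[OF tau0 taud] .
    then have "L2norm M (\<lambda>x. T tau f x - f x) / tau < e"
      using L2norm_divide[of M "\<lambda>x. T tau f x - f x" "complex_of_real tau"] tau0 by simp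
    then have tb: "L2norm M (\<lambda>x. T tau f x - f x) \<le> e * tau" using tau0 by (simp add: field_simps)
    have "G s - G 0 = (\<Sum>k<n. G (real (Suc k) * tau) - G (real k * tau))"
      using sum_lessThan_telescope[of "\<lambda>k. G (real k * tau)" n] npos by (simp add: tau_def)
    then have "cmod (G s - G 0) \<le> (\<Sum>k<n. cmod (G (real (Suc k) * tau) - G (real k * tau)))"
      by (simp add: norm_sum)
    also have "\<dots> \<le> (\<Sum>k<n. (e * tau) * L2norm M g)"
    proof (rule sum_mono)
      fix k assume "k \<in> {..<n}"
      have "cmod (G (real (Suc k) * tau) - G (real k * tau)) = cmod (G (real k * tau + tau) - G (real k * tau))"
        by (simp add: algebra_simps)
      also have "\<dots> \<le> L2norm M (\<lambda>x. T tau f x - f x) * L2norm M g"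
        using tau0 by (intro step) auto
      also have "\<dots> \<le> (e * tau) * L2norm M g" by (intro mult_right_mono tb L2norm_nonneg)
      finally show "cmod (G (real (Suc k) * tau) - G (real k * tau)) \<le> (e * tau) * L2norm M g" .
    qed
    also have "\<dots> = e * (s * L2norm M g)" using npos by (simp add: tau_def field_simps)
    finally show ?thesis .
  qed
  have "cmod (G s - G 0) \<le> 0"
    by (rule eps_zero[of "s * L2norm M g"]) (use main s0 L2norm_nonneg[of M g] in auto)
  then have "G s = G 0" by simp
  moreover have "G 0 = (\<integral>x. f x * cnj (g x) \<partial>M)"
    unfolding G_def by (rule ip_cong2[OF fL2 L2T[OF _ gL2] gL2 T0[OF gL2]]) simp
  ultimately show ?thesis by (simp add: G_def)
qed

end

definition trunc :: "'a::metric_space \<Rightarrow> nat \<Rightarrow> ('a \<Rightarrow> complex) \<Rightarrow> 'a \<Rightarrow> complex" where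
  "trunc z0 n f x = indicator (ball z0 (real n)) x * (if cmod (f x) \<le> real n then f x else 0)"

lemma trunc_le: "cmod (trunc z0 n f x) \<le> cmod (f x)"
  by (auto simp: trunc_def indicator_def)

lemma trunc_le_n: "cmod (trunc z0 n f x) \<le> real n"
  by (auto simp: trunc_def indicator_def)

lemma trunc_supp: "x \<notin> ball z0 (real n) \<Longrightarrow> trunc z0 n f x = 0"
  by (auto simp: trunc_def)

lemma trunc_meas:
  fixes M :: "'a::metric_space measure"
  assumes "sets M = sets borel" "f \<in> borel_measurable M"
  shows "trunc z0 n f \<in> borel_measurable M"
proof -
  have b: "ball z0 (real n) \<in> sets M" using assms(1) by simp
  have i: "(\<lambda>x. indicator (ball z0 (real n)) x :: complex) \<in> borel_measurable M"
    by (rule borel_measurable_indicator[OF b])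
  have p: "(\<lambda>x. if cmod (f x) \<le> real n then f x else 0) \<in> borel_measurable M"
    using assms(2) by measurable
  show ?thesis unfolding trunc_def[abs_def] using i p by (rule borel_measurable_times)
qed

lemma trunc_L2:
  fixes M :: "'a::metric_space measure"
  assumes "sets M = sets borel" "f \<in> L2 M"
  shows "trunc z0 n f \<in> L2 M"
  by (rule L2_bound[OF assms(2) trunc_meas[OF assms(1) L2_D(1)[OF assms(2)]]]) (simp add: trunc_le)

lemma trunc_approx:
  fixes M :: "'a::metric_space measure"
  assumes sb: "sets M = sets borel" and fL2: "f \<in> L2 M" and e: "e > 0"
  shows "\<exists>n. L2norm M (\<lambda>x. f x - trunc z0 n f x) < e"
proof -
  have mf: "f \<in> borel_measurable M" using fL2 by (rule L2_D)
  define s where "s = (\<lambda>n x. (cmod (f x - trunc z0 n f x))\<^sup>2)"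
  have "(\<lambda>n. integral\<^sup>L M (s n)) \<longlonglongrightarrow> integral\<^sup>L M (\<lambda>x. 0)"
  proof (rule integral_dominated_convergence[where w="\<lambda>x. (cmod (f x))\<^sup>2"])
    show "(\<lambda>x. 0::real) \<in> borel_measurable M" by simp
    show "s n \<in> borel_measurable M" for n
      unfolding s_def using mf trunc_meas[OF sb mf, of z0 n] by measurable
    show "integrable M (\<lambda>x. (cmod (f x))\<^sup>2)" by (rule L2_D(2)[OF fL2])
    show "AE x in M. (\<lambda>n. s n x) \<longlonglongrightarrow> 0"
    proof (rule AE_I2)
      fix x
      obtain N :: nat where N: "dist z0 x + cmod (f x) < N" using reals_Archimedean2 by blast
      have "\<forall>\<^sub>F n in sequentially. s n x = 0"
        unfolding eventually_sequentially
      proof (intro exI allI impI)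
        fix n assume "N \<le> n"
        then have Nn: "real N \<le> real n" by simp
        have "dist z0 x < real n" using N Nn norm_ge_zero[of "f x"] by linarith
        moreover have "cmod (f x) \<le> real n" using N Nn zero_le_dist[of z0 x] by linarith
        ultimately have "x \<in> ball z0 (real n)" "cmod (f x) \<le> real n" by auto
        then show "s n x = 0" by (simp add: s_def trunc_def)
      qed
      then show "(\<lambda>n. s n x) \<longlonglongrightarrow> 0" by (rule tendsto_eventually)
    qed
    show "AE x in M. norm (s n x) \<le> (cmod (f x))\<^sup>2" for n
      by (rule AE_I2) (auto simp: s_def trunc_def indicator_def)
  qed
  then have "(\<lambda>n. sqrt (integral\<^sup>L M (s n))) \<longlonglongrightarrow> sqrt 0" by (intro tendsto_intros) simp
  then have "\<forall>\<^sub>F n in sequentially. sqrt (integral\<^sup>L M (s n)) < e"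
    using e by (intro order_tendstoD(2)) auto
  then obtain n where "sqrt (integral\<^sup>L M (s n)) < e" by (auto simp: eventually_sequentially)
  then have "L2norm M (\<lambda>x. f x - trunc z0 n f x) < e" by (simp add: L2norm_def s_def)
  then show ?thesis by blast
qed

lemma bdd_L2:
  assumes "g \<in> borel_measurable M" "\<And>x. cmod (g x) \<le> K" "\<And>x. x \<notin> B \<Longrightarrow> g x = 0"
    "B \<in> sets M" "emeasure M B < \<infinity>"
  shows "g \<in> L2 M"
proof (rule L2_I[OF assms(1)])
  have "integrable M (\<lambda>x. K\<^sup>2 * indicator B x :: real)" using assms(4,5) by simp
  then show "integrable M (\<lambda>x. (cmod (g x))\<^sup>2)"
  proof (rule Bochner_Integration.integrable_bound)
    show "(\<lambda>x. (cmod (g x))\<^sup>2) \<in> borel_measurable M" using assms(1) by measurable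
    show "AE x in M. norm ((cmod (g x))\<^sup>2) \<le> norm (K\<^sup>2 * indicator B x :: real)"
    proof (rule AE_I2)
      fix x
      show "norm ((cmod (g x))\<^sup>2) \<le> norm (K\<^sup>2 * indicator B x :: real)"
      proof (cases "x \<in> B")
        case True
        have "(cmod (g x))\<^sup>2 \<le> K\<^sup>2"
          using assms(2)[of x] by (intro power_mono) auto
        also have "\<dots> \<le> \<bar>K\<^sup>2\<bar>" by simp
        finally show ?thesis using True by simp
      qed (simp add: assms(3))
    qed
  qed
qed

lemma pw_ineq:
  fixes y d q :: real
  assumes "y \<ge> 0" "d > 0" "q \<ge> 1"
  shows "y \<le> d + d powr (1 - q) * y powr q"
proof (cases "y \<le> d")
  case True
  have "0 \<le> d powr (1 - q) * y powr q" by simp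
  then show ?thesis using True by linarith
next
  case False
  then have yd: "y > d" by simp
  then have y0: "y > 0" using assms by simp
  have dy: "d powr (q - 1) \<le> y powr (q - 1)" using yd assms by (intro powr_mono2) auto
  have "y powr q = y powr (q - 1) * y" using powr_add[of y "q - 1" 1] y0 by simp
  also have "\<dots> \<ge> d powr (q - 1) * y" by (rule mult_right_mono[OF dy]) (use y0 in simp)
  finally have "y powr q \<ge> d powr (q - 1) * y" .
  then have "d powr (1 - q) * y powr q \<ge> d powr (1 - q) * (d powr (q - 1) * y)"
    by (intro mult_left_mono) auto
  moreover have "d powr (1 - q) * d powr (q - 1) = 1"
    using powr_add[of d "1 - q" "q - 1", symmetric] assms(2) by simp
  then have "d powr (1 - q) * (d powr (q - 1) * y) = y" by (metis mult.assoc mult_1)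
  ultimately show ?thesis using assms by simp
qed

lemma Lnorm_small:
  fixes M :: "'a measure"
  assumes p: "1 \<le> p0" "p0 < 2" and B: "B \<in> sets M" "emeasure M B < \<infinity>" and eta: "eta > 0"
  shows "\<exists>alpha>0. \<forall>u A. u \<in> borel_measurable M \<longrightarrow> A \<le> alpha \<longrightarrow> Lnorm_le M (conj_exp p0) u A \<longrightarrow>
           (\<integral>\<^sup>+x. indicator B x * ennreal (cmod (u x)) \<partial>M) \<le> ennreal eta"
proof -
  define mB where "mB = enn2real (emeasure M B)"
  have mB: "emeasure M B = ennreal mB" "mB \<ge> 0" using B(2) by (auto simp: mB_def less_top)
  show ?thesis
  proof (cases "p0 = 1")
    case True
    define alpha where "alpha = eta / (mB + 1)"
    have a0: "alpha > 0" using eta mB by (simp add: alpha_def)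
    show ?thesis
    proof (intro exI[of _ alpha] conjI allI impI a0)
      fix u :: "'a \<Rightarrow> complex" and A
      assume um: "u \<in> borel_measurable M" and A: "A \<le> alpha" and L: "Lnorm_le M (conj_exp p0) u A"
      have ae: "AE x in M. cmod (u x) \<le> A" using L True by (simp add: Lnorm_le_def conj_exp_def)
      have "(\<integral>\<^sup>+x. indicator B x * ennreal (cmod (u x)) \<partial>M) \<le> (\<integral>\<^sup>+x. ennreal alpha * indicator B x \<partial>M)"
      proof (rule nn_integral_mono_AE)
        show "AE x in M. indicator B x * ennreal (cmod (u x)) \<le> ennreal alpha * indicator B x"
          using ae
        proof eventually_elim
          case (elim x)
          then have "ennreal (cmod (u x)) \<le> ennreal alpha" using A by (intro ennreal_leI) auto
          then show ?case by (auto simp: indicator_def)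
        qed
      qed
      also have "\<dots> = ennreal alpha * emeasure M B" by (rule nn_integral_cmult_indicator[OF B(1)])
      also have "\<dots> = ennreal (alpha * mB)" using mB a0 by (simp add: ennreal_mult)
      also have "\<dots> \<le> ennreal eta"
      proof (rule ennreal_leI)
        have "alpha * mB \<le> alpha * (mB + 1)" using a0 by simp
        also have "\<dots> = eta" using mB by (simp add: alpha_def)
        finally show "alpha * mB \<le> eta" .
      qed
      finally show "(\<integral>\<^sup>+x. indicator B x * ennreal (cmod (u x)) \<partial>M) \<le> ennreal eta" .
    qed
  next
    case False
    then have p1: "p0 > 1" using p by simp
    define q where "q = p0 / (p0 - 1)"
    have q1: "q \<ge> 1" using p1 by (simp add: q_def field_simps)
    have ce: "conj_exp p0 = ereal q" using False by (simp add: conj_exp_def q_def)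
    define d where "d = eta / (2 * (mB + 1))"
    have d0: "d > 0" using eta mB by (simp add: d_def)
    define alpha where "alpha = (eta / 2 * d powr (q - 1)) powr (1 / q)"
    have a0: "alpha > 0" using eta d0 by (simp add: alpha_def)
    have aq: "alpha powr q = eta / 2 * d powr (q - 1)"
      using eta d0 q1 by (simp add: alpha_def powr_powr)
    show ?thesis
    proof (intro exI[of _ alpha] conjI allI impI a0)
      fix u :: "'a \<Rightarrow> complex" and A
      assume um: "u \<in> borel_measurable M" and A: "A \<le> alpha" and L: "Lnorm_le M (conj_exp p0) u A"
      have A0: "0 \<le> A" and int: "(\<integral>\<^sup>+x. ennreal (cmod (u x) powr q) \<partial>M) \<le> ennreal (A powr q)"
        using L by (auto simp: Lnorm_le_def ce)
      have "(\<integral>\<^sup>+x. indicator B x * ennreal (cmod (u x)) \<partial>M)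
          \<le> (\<integral>\<^sup>+x. ennreal d * indicator B x + ennreal (d powr (1 - q)) * ennreal (cmod (u x) powr q) \<partial>M)"
      proof (rule nn_integral_mono)
        fix x
        show "indicator B x * ennreal (cmod (u x)) \<le> ennreal d * indicator B x + ennreal (d powr (1 - q)) * ennreal (cmod (u x) powr q)"
        proof (cases "x \<in> B")
          case True
          have "ennreal (cmod (u x)) \<le> ennreal (d + d powr (1 - q) * cmod (u x) powr q)"
            by (intro ennreal_leI pw_ineq d0 q1) simp
          also have "\<dots> = ennreal d + ennreal (d powr (1 - q)) * ennreal (cmod (u x) powr q)"
            using d0 by (simp add: ennreal_mult)
          finally show ?thesis using True by simp
        qed simp
      qed
      also have "\<dots> = (\<integral>\<^sup>+x. ennreal d * indicator B x \<partial>M) + ennreal (d powr (1 - q)) * (\<integral>\<^sup>+x. ennreal (cmod (u x) powr q) \<partial>M)"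
      proof -
        have m1: "(\<lambda>x. ennreal d * indicator B x) \<in> borel_measurable M" using B(1) by measurable
        have m2: "(\<lambda>x. ennreal (cmod (u x) powr q)) \<in> borel_measurable M" using um by measurable
        have m3: "(\<lambda>x. ennreal (d powr (1 - q)) * ennreal (cmod (u x) powr q)) \<in> borel_measurable M" using um by measurable
        show ?thesis using nn_integral_add[OF m1 m3] nn_integral_cmult[OF m2] by simp
      qed
      also have "\<dots> \<le> ennreal d * emeasure M B + ennreal (d powr (1 - q)) * ennreal (A powr q)"
        unfolding nn_integral_cmult_indicator[OF B(1)] by (intro add_left_mono mult_left_mono int) simp
      also have "\<dots> = ennreal (d * mB + d powr (1 - q) * A powr q)"
        using mB d0 A0 by (simp add: ennreal_mult)
      also have "\<dots> \<le> ennreal eta"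
      proof (rule ennreal_leI)
        have "d * mB \<le> eta / 2"
        proof -
          have "d * mB \<le> d * (mB + 1)" using d0 by simp
          also have "\<dots> = eta / 2" using mB by (simp add: d_def field_simps add_nonneg_pos)
          finally show ?thesis .
        qed
        moreover have "d powr (1 - q) * A powr q \<le> d powr (1 - q) * alpha powr q"
          using A A0 q1 by (intro mult_left_mono powr_mono2) auto
        moreover have "d powr (1 - q) * alpha powr q = eta / 2"
        proof -
          have "d powr (1 - q) * d powr (q - 1) = 1"
            using powr_add[of d "1 - q" "q - 1", symmetric] d0 by simp
          moreover have "d powr (1 - q) * alpha powr q = eta / 2 * (d powr (1 - q) * d powr (q - 1))"
            by (simp add: aq algebra_simps)
          ultimately show ?thesis by simp
        qed
        ultimately show "d * mB + d powr (1 - q) * A powr q \<le> eta" by linarith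
      qed
      finally show "(\<integral>\<^sup>+x. indicator B x * ennreal (cmod (u x)) \<partial>M) \<le> ennreal eta" .
    qed
  qed
qed


locale dgctx = hs M T for M :: "'a::metric_space measure" and T +
  fixes p0 \<beta>1 \<beta>2 :: real and z0 :: 'a
  assumes mms: "mms M" and rd: "reverse_doubling M" and p1: "1 \<le> p0" and p2: "p0 < 2"
    and dg: "DG M T p0 \<beta>1 \<beta>2"
begin

lemma sb: "sets M = sets borel" using mms by (simp add: mms_def)

lemma ball_sets: "ball x r \<in> sets M" using sb by simp

lemma ball_fin: "emeasure M (ball x r) < \<infinity>"
proof (cases "r > 0")
  case True then show ?thesis using mms by (simp add: mms_def)
next
  case False then show ?thesis by (simp add: ball_empty)
qed

lemma V_pos: "r > 0 \<Longrightarrow> V M x r > 0"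
proof -
  assume r: "r > 0"
  have a: "0 < emeasure M (ball x r)" "emeasure M (ball x r) < \<infinity>" using mms r by (auto simp: mms_def)
  then have "emeasure M (ball x r) = ennreal (measure M (ball x r))"
    by (intro emeasure_eq_ennreal_measure) (auto simp: top_unique)
  with a(1) show ?thesis by (simp add: V_def)
qed

lemma V_large: "\<exists>t\<ge>t0. V M z0 t \<ge> B"
proof -
  obtain nu c where nu: "nu > 0" and c: "c > 0" and rdi: "\<And>x r s. 0 < s \<Longrightarrow> s \<le> r \<Longrightarrow> V M x r / V M x s \<ge> c * (r / s) powr nu"
    using rd unfolding reverse_doubling_def by blast
  define V1 where "V1 = V M z0 1"
  have V1: "V1 > 0" using V_pos[of 1 z0] by (simp add: V1_def)
  define X where "X = max 0 (B / (c * V1))"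
  define t where "t = max (max t0 1) (X powr (1 / nu))"
  have t1: "t \<ge> 1" by (simp add: t_def)
  have "V M z0 t / V1 \<ge> c * t powr nu" using rdi[of 1 t z0] t1 by (simp add: V1_def)
  then have Vt: "V M z0 t \<ge> c * t powr nu * V1" using V1 by (simp add: field_simps)
  have "t powr nu \<ge> (X powr (1 / nu)) powr nu"
    using nu by (intro powr_mono2) (auto simp: t_def)
  also have "(X powr (1 / nu)) powr nu = X" using nu by (simp add: powr_powr X_def)
  finally have tX: "t powr nu \<ge> X" .
  have "B = c * V1 * (B / (c * V1))" using c V1 by (simp add: field_simps)
  also have "\<dots> \<le> c * V1 * X" using c V1 by (intro mult_left_mono) (auto simp: X_def)
  finally have "B \<le> c * V1 * X" .
  also have "\<dots> \<le> c * V1 * t powr nu" using tX c V1 by (intro mult_left_mono) auto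
  also have "\<dots> \<le> V M z0 t" using Vt by (simp add: algebra_simps)
  finally show ?thesis by (intro exI[of _ t]) (auto simp: t_def)
qed

lemma rho_nonneg: "rho \<beta>1 \<beta>2 t \<ge> 0" by (simp add: rho_def)

lemma decay:
  assumes fL2: "f \<in> L2 M" and gm: "g \<in> borel_measurable M" and gK: "\<And>x. cmod (g x) \<le> K"
    and gs: "\<And>x. x \<notin> ball z0 R \<Longrightarrow> g x = 0" and e: "e > 0"
  shows "\<exists>t>0. cmod (\<integral>x. f x * cnj (T (rho \<beta>1 \<beta>2 t) g x) \<partial>M) \<le> e"
proof -
  have gL2: "g \<in> L2 M" by (rule bdd_L2[OF gm gK gs ball_sets ball_fin])
  obtain C c0 where DGp: "\<And>x y t f. f \<in> L2 M \<Longrightarrow> t > 0 \<Longrightarrow>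
     (let \<beta> = (if t < 1 then \<beta>1 else \<beta>2);
          f' = (\<lambda>z. indicator (ball y t) z * f z) in
      Lnorm_le M (conj_exp p0)
        (\<lambda>z. indicator (ball x t) z * T (rho \<beta>1 \<beta>2 t) f' z)
        (C / V M x t powr (1 / p0 - (1 - 1 / p0))
           * exp (- c0 * (dist x y / t) powr (\<beta> / (\<beta> - 1))) * Lpnorm M p0 f'))"
    using dg unfolding DG_def by blast
  define Ng where "Ng = L2norm M g"
  have Ng0: "Ng \<ge> 0" by (simp add: Ng_def L2norm_nonneg)
  obtain n where n: "L2norm M (\<lambda>x. f x - trunc z0 n f x) < e / (2 * (Ng + 1))"
    using trunc_approx[OF sb fL2, of "e / (2 * (Ng + 1))" z0] e Ng0 by auto
  define f1 where "f1 = trunc z0 n f"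
  have f1L2: "f1 \<in> L2 M" unfolding f1_def by (rule trunc_L2[OF sb fL2])
  define B where "B = ball z0 (real n)"
  define eta where "eta = e / (2 * (real n + 1))"
  have eta0: "eta > 0" using e by (simp add: eta_def add_nonneg_pos)
  have "\<exists>alpha>0. \<forall>u A. u \<in> borel_measurable M \<longrightarrow> A \<le> alpha \<longrightarrow> Lnorm_le M (conj_exp p0) u A \<longrightarrow>
           (\<integral>\<^sup>+x. indicator B x * ennreal (cmod (u x)) \<partial>M) \<le> ennreal eta"
    unfolding B_def by (rule Lnorm_small[OF p1 p2 ball_sets ball_fin eta0])
  then obtain alpha where a0: "alpha > 0" and asm0: "\<forall>u A. u \<in> borel_measurable M \<longrightarrow> A \<le> alpha \<longrightarrow> Lnorm_le M (conj_exp p0) u A \<longrightarrow>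
           (\<integral>\<^sup>+x. indicator B x * ennreal (cmod (u x)) \<partial>M) \<le> ennreal eta" by blast
  have asm: "\<And>u A. u \<in> borel_measurable M \<Longrightarrow> A \<le> alpha \<Longrightarrow>
      Lnorm_le M (conj_exp p0) u A \<Longrightarrow> (\<integral>\<^sup>+x. indicator B x * ennreal (cmod (u x)) \<partial>M) \<le> ennreal eta"
    using asm0 by blast
  define Lp where "Lp = Lpnorm M p0 g"
  define ex where "ex = 1 / p0 - (1 - 1 / p0)"
  have ex0: "ex > 0" using p1 p2 by (simp add: ex_def field_simps)
  define X where "X = max 0 (C * Lp / alpha)"
  define Y where "Y = X powr (1 / ex)"
  obtain t where t: "t \<ge> max (max 1 R) (real n)" and Vt: "V M z0 t \<ge> Y"
    using V_large[of "max (max 1 R) (real n)" Y] by blast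
  have t0: "t > 0" and t1: "t \<ge> 1" using t by auto
  have Vp: "V M z0 t > 0" using V_pos[OF t0] .
  have "V M z0 t powr ex \<ge> Y powr ex" using Vt ex0 by (intro powr_mono2) (auto simp: Y_def)
  also have "Y powr ex = X" using ex0 by (simp add: Y_def powr_powr X_def)
  finally have VX: "V M z0 t powr ex \<ge> X" .
  have Vex: "V M z0 t powr ex > 0" using Vp by simp
  define At where "At = C / V M z0 t powr ex * Lp"
  have At: "At \<le> alpha"
  proof -
    have "C * Lp = alpha * (C * Lp / alpha)" using a0 by simp
    also have "\<dots> \<le> alpha * X" using a0 by (intro mult_left_mono) (auto simp: X_def)
    finally have "C * Lp \<le> alpha * X" .
    also have "\<dots> \<le> alpha * V M z0 t powr ex" using VX a0 by simp
    finally have "C * Lp / V M z0 t powr ex \<le> alpha" using Vex by (simp add: pos_divide_le_eq)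
    then show ?thesis by (simp add: At_def)
  qed
  have gball: "(\<lambda>z. indicator (ball z0 t) z * g z) = g"
  proof
    fix z show "indicator (ball z0 t) z * g z = g z"
    proof (cases "z \<in> ball z0 t")
      case False
      then have "z \<notin> ball z0 R" using t by auto
      then show ?thesis using gs False by simp
    qed simp
  qed
  define s where "s = rho \<beta>1 \<beta>2 t"
  have s0: "s \<ge> 0" by (simp add: s_def rho_nonneg)
  define u where "u = (\<lambda>z. indicator (ball z0 t) z * T s g z)"
  have Lu: "Lnorm_le M (conj_exp p0) u At"
    using DGp[OF gL2 t0, of z0 z0] unfolding Let_def gball by (simp add: u_def At_def ex_def Lp_def s_def)
  have um: "u \<in> borel_measurable M" unfolding u_def using measT[OF s0 gL2] ball_sets by measurable
  have ub: "(\<integral>\<^sup>+x. indicator B x * ennreal (cmod (u x)) \<partial>M) \<le> ennreal eta"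
    by (rule asm[OF um At Lu])
  have TgL2: "T s g \<in> L2 M" by (rule L2T[OF s0 gL2])
  have part1: "cmod (\<integral>x. (f x - f1 x) * cnj (T s g x) \<partial>M) \<le> e / 2"
  proof -
    have "cmod (\<integral>x. (f x - f1 x) * cnj (T s g x) \<partial>M) \<le> L2norm M (\<lambda>x. f x - f1 x) * L2norm M (T s g)"
      by (rule CS(2)[OF L2_diff[OF fL2 f1L2] TgL2])
    also have "\<dots> \<le> (e / (2 * (Ng + 1))) * Ng"
      using n Tcontr[OF s0 gL2] e Ng0 unfolding f1_def Ng_def
      by (intro mult_mono) (auto simp: L2norm_nonneg less_imp_le)
    also have "\<dots> \<le> e / 2" using e Ng0 by (simp add: field_simps)
    finally show ?thesis .
  qed
  have part2: "cmod (\<integral>x. f1 x * cnj (T s g x) \<partial>M) \<le> e / 2"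
  proof -
    have int: "integrable M (\<lambda>x. cmod (f1 x) * cmod (T s g x))" by (rule CS_real(1)[OF f1L2 TgL2])
    have "cmod (\<integral>x. f1 x * cnj (T s g x) \<partial>M) \<le> (\<integral>x. cmod (f1 x * cnj (T s g x)) \<partial>M)"
      by (rule integral_norm_bound)
    also have "\<dots> = (\<integral>x. cmod (f1 x) * cmod (T s g x) \<partial>M)" by (simp add: norm_mult)
    finally have i1: "cmod (\<integral>x. f1 x * cnj (T s g x) \<partial>M) \<le> (\<integral>x. cmod (f1 x) * cmod (T s g x) \<partial>M)" .
    have "ennreal (\<integral>x. cmod (f1 x) * cmod (T s g x) \<partial>M) = (\<integral>\<^sup>+x. ennreal (cmod (f1 x) * cmod (T s g x)) \<partial>M)"
      by (rule nn_integral_eq_integral[OF int, symmetric]) auto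
    also have "\<dots> \<le> (\<integral>\<^sup>+x. ennreal (real n) * (indicator B x * ennreal (cmod (u x))) \<partial>M)"
    proof (rule nn_integral_mono)
      fix x
      show "ennreal (cmod (f1 x) * cmod (T s g x)) \<le> ennreal (real n) * (indicator B x * ennreal (cmod (u x)))"
      proof (cases "x \<in> B")
        case True
        then have "x \<in> ball z0 t" using t by (auto simp: B_def)
        then have "u x = T s g x" by (simp add: u_def)
        moreover have "cmod (f1 x) \<le> real n" unfolding f1_def by (rule trunc_le_n)
        ultimately have "cmod (f1 x) * cmod (T s g x) \<le> real n * cmod (u x)" by (simp add: mult_right_mono)
        then show ?thesis using True by (simp add: ennreal_mult[symmetric] ennreal_leI)
      next
        case False
        then have "f1 x = 0" unfolding f1_def B_def by (rule trunc_supp)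
        then show ?thesis by simp
      qed
    qed
    also have "\<dots> = ennreal (real n) * (\<integral>\<^sup>+x. indicator B x * ennreal (cmod (u x)) \<partial>M)"
      by (rule nn_integral_cmult) (use um ball_sets in \<open>simp add: B_def\<close>)
    also have "\<dots> \<le> ennreal (real n) * ennreal eta" by (intro mult_left_mono ub) simp
    also have "\<dots> = ennreal (real n * eta)" using eta0 by (simp add: ennreal_mult)
    finally have "(\<integral>x. cmod (f1 x) * cmod (T s g x) \<partial>M) \<le> real n * eta"
      using eta0 by (subst (asm) ennreal_le_iff) auto
    also have "real n * eta \<le> e / 2"
    proof -
      have "real n * eta = e / 2 * (real n / (real n + 1))" by (simp add: eta_def field_simps)
      also have "\<dots> \<le> e / 2 * 1" using e by (intro mult_left_mono) auto
      finally show ?thesis by simp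
    qed
    finally show ?thesis using i1 by linarith
  qed
  have "(\<integral>x. f x * cnj (T s g x) \<partial>M) = (\<integral>x. (f x - f1 x) * cnj (T s g x) \<partial>M) + (\<integral>x. f1 x * cnj (T s g x) \<partial>M)"
    using ip_diff1[OF TgL2 fL2 f1L2] by simp
  then have "cmod (\<integral>x. f x * cnj (T s g x) \<partial>M) \<le> e / 2 + e / 2"
    using part1 part2 norm_triangle_ineq[of "\<integral>x. (f x - f1 x) * cnj (T s g x) \<partial>M" "\<integral>x. f1 x * cnj (T s g x) \<partial>M"]
    by simp
  then show ?thesis using t0 by (intro exI[of _ t]) (simp add: s_def)
qed

end

lemma sum_add_block:
  fixes c :: "nat \<Rightarrow> 'b::comm_monoid_add"
  shows "(\<Sum>j<n + K. c j) = (\<Sum>j<n. c j) + (\<Sum>i<K. c (n + i))"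
  by (induction K) (simp_all add: add.assoc)

lemma sum_split_mult:
  fixes c :: "nat \<Rightarrow> 'b::comm_monoid_add"
  shows "(\<Sum>j<N * K. c j) = (\<Sum>k<N. \<Sum>i<K. c (k * K + i))"
proof (induction N)
  case (Suc N)
  have "(\<Sum>j<Suc N * K. c j) = (\<Sum>j<N * K + K. c j)" by (simp add: add.commute)
  also have "\<dots> = (\<Sum>j<N * K. c j) + (\<Sum>i<K. c (N * K + i))" by (rule sum_add_block)
  finally show ?case using Suc by simp
qed simp

lemma sum_shift_diff:
  fixes a :: "nat \<Rightarrow> 'b::ab_group_add"
  shows "(\<Sum>k<N. a (k + m)) - (\<Sum>k<N. a k) = (\<Sum>k<m. a (N + k)) - (\<Sum>k<m. a k)"
proof (induction N)
  case 0 then show ?case by simp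
next
  case (Suc N)
  have tel: "(\<Sum>k<m. a (Suc N + k)) - (\<Sum>k<m. a (N + k)) = a (N + m) - a N"
    using sum_lessThan_telescope[of "\<lambda>k. a (N + k)" m] by (simp add: sum_subtractf[symmetric])
  have "(\<Sum>k<Suc N. a (k + m)) - (\<Sum>k<Suc N. a k) = ((\<Sum>k<N. a (k + m)) - (\<Sum>k<N. a k)) + (a (N + m) - a N)"
    by (simp add: algebra_simps)
  also have "\<dots> = (\<Sum>k<m. a (N + k)) - (\<Sum>k<m. a k) + ((\<Sum>k<m. a (Suc N + k)) - (\<Sum>k<m. a (N + k)))"
    using Suc tel by simp
  also have "\<dots> = (\<Sum>k<m. a (Suc N + k)) - (\<Sum>k<m. a k)" by simp
  finally show ?case .
qed

lemma blk:
  assumes "finite I" "\<And>i. i \<in> I \<Longrightarrow> G i \<in> L2 M" "\<And>i. i \<in> I \<Longrightarrow> L2norm M (G i) \<le> e" "w \<ge> 0"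
  shows "L2norm M (\<lambda>x. \<Sum>i\<in>I. complex_of_real w * G i x) \<le> real (card I) * w * e"
proof -
  have "L2norm M (\<lambda>x. \<Sum>i\<in>I. complex_of_real w * G i x) \<le> (\<Sum>i\<in>I. L2norm M (\<lambda>x. complex_of_real w * G i x))"
    using assms by (intro L2norm_sum L2_cmult) auto
  also have "\<dots> = (\<Sum>i\<in>I. w * L2norm M (G i))" using assms(4) by (simp add: L2norm_cmult)
  also have "\<dots> \<le> (\<Sum>i\<in>I. w * e)" using assms by (intro sum_mono mult_left_mono) auto
  also have "\<dots> = real (card I) * w * e" by simp
  finally show ?thesis .
qed

context hs
begin

definition RS :: "('a \<Rightarrow> complex) \<Rightarrow> real \<Rightarrow> nat \<Rightarrow> 'a \<Rightarrow> complex" where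
  "RS h s N = (\<lambda>x. \<Sum>k<N. complex_of_real (s / real N) * T (real k * s / real N) h x)"

lemma RS_L2: "h \<in> L2 M \<Longrightarrow> s \<ge> 0 \<Longrightarrow> RS h s N \<in> L2 M"
  unfolding RS_def by (intro L2_sum L2_cmult L2T) auto

lemma RS_cauchy1:
  assumes hL2: "h \<in> L2 M" and s0: "s > 0" and N: "N > 0" and K: "K > 0"
    and d: "\<And>v. 0 \<le> v \<Longrightarrow> v < dl \<Longrightarrow> L2norm M (\<lambda>x. T v h x - h x) < e" and sN: "s / real N \<le> dl"
  shows "L2norm M (\<lambda>x. RS h s (N * K) x - RS h s N x) \<le> s * e"
proof -
  define w where "w = s / real (N * K)"
  define a where "a k i = real (k * K + i) * s / real (N * K)" for k i
  define b where "b k = real k * s / real N" for k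
  have w0: "w \<ge> 0" using s0 by (simp add: w_def)
  have ab: "a k i = b k + real i * w" for k i
    using N K by (simp add: a_def b_def w_def field_simps)
  have eq: "RS h s (N * K) x - RS h s N x = (\<Sum>p\<in>{..<N} \<times> {..<K}. complex_of_real w * (T (a (fst p) (snd p)) h x - T (b (fst p)) h x))" for x
  proof -
    have e1: "RS h s (N * K) x = (\<Sum>k<N. \<Sum>i<K. complex_of_real w * T (a k i) h x)"
      unfolding RS_def w_def a_def by (rule sum_split_mult)
    have e2: "RS h s N x = (\<Sum>k<N. \<Sum>i<K. complex_of_real w * T (b k) h x)"
    proof -
      have "complex_of_real (s / real N) = of_nat K * complex_of_real w"
        using K by (simp add: w_def field_simps)
      then show ?thesis unfolding RS_def b_def by (simp add: algebra_simps)
    qed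
    have "RS h s (N * K) x - RS h s N x = (\<Sum>k<N. \<Sum>i<K. complex_of_real w * T (a k i) h x) - (\<Sum>k<N. \<Sum>i<K. complex_of_real w * T (b k) h x)"
      by (simp only: e1 e2)
    also have "\<dots> = (\<Sum>k<N. \<Sum>i<K. complex_of_real w * (T (a k i) h x - T (b k) h x))"
      by (simp only: sum_subtractf[symmetric] right_diff_distrib)
    also have "\<dots> = (\<Sum>p\<in>{..<N} \<times> {..<K}. complex_of_real w * (T (a (fst p) (snd p)) h x - T (b (fst p)) h x))"
      by (simp add: sum.cartesian_product split_def)
    finally show ?thesis .
  qed
  have "L2norm M (\<lambda>x. RS h s (N * K) x - RS h s N x)
      = L2norm M (\<lambda>x. \<Sum>p\<in>{..<N} \<times> {..<K}. complex_of_real w * (T (a (fst p) (snd p)) h x - T (b (fst p)) h x))"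
    by (simp add: eq)
  also have "\<dots> \<le> real (card ({..<N} \<times> {..<K})) * w * e"
  proof (rule blk[OF _ _ _ w0])
    fix p assume p: "p \<in> {..<N} \<times> {..<K}"
    have b0: "b (fst p) \<ge> 0" and v0: "real (snd p) * w \<ge> 0" using s0 w0 by (auto simp: b_def)
    show "(\<lambda>x. T (a (fst p) (snd p)) h x - T (b (fst p)) h x) \<in> L2 M"
      using b0 v0 hL2 by (intro L2_diff L2T) (auto simp: ab)
    have "real (snd p) * w < dl"
    proof -
      have "real (snd p) < real K" using p by auto
      moreover have "w > 0" using s0 N K by (simp add: w_def)
      ultimately have "real (snd p) * w < real K * w" by (rule mult_strict_right_mono)
      also have "real K * w = s / real N" using K by (simp add: w_def)
      finally show ?thesis using sN by simp
    qed
    then have "L2norm M (\<lambda>x. T (real (snd p) * w) h x - h x) < e" using d v0 by blast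
    moreover have "L2norm M (\<lambda>x. T (b (fst p) + real (snd p) * w) h x - T (b (fst p)) h x)
        \<le> L2norm M (\<lambda>x. T (real (snd p) * w) h x - h x)"
      by (rule Tshift[OF b0 v0 hL2])
    ultimately show "L2norm M (\<lambda>x. T (a (fst p) (snd p)) h x - T (b (fst p)) h x) \<le> e"
      by (simp add: ab)
  qed simp
  also have "\<dots> = s * e" using N K by (simp add: w_def)
  finally show ?thesis .
qed

lemma RS_limit:
  assumes hL2: "h \<in> L2 M" and s0: "s > 0"
  shows "\<exists>F\<in>L2 M. \<forall>e>0. \<exists>N0. \<forall>n\<ge>N0. L2norm M (\<lambda>x. F x - RS h s n x) < e"
proof (rule L2_complete)
  show "RS h s n \<in> L2 M" for n using RS_L2[OF hL2] s0 by simp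
  fix e :: real assume e: "e > 0"
  obtain dl where dl: "dl > 0" and d: "\<And>v. 0 \<le> v \<Longrightarrow> v < dl \<Longrightarrow> L2norm M (\<lambda>x. T v h x - h x) < e / (3 * s)"
    using Tmod[OF hL2, of "e / (3 * s)"] e s0 by auto
  obtain N0 :: nat where N0: "s / dl < N0" using reals_Archimedean2 by blast
  have N0p: "N0 > 0" using N0 s0 dl by (cases N0) (auto simp: field_simps)
  show "\<exists>N. \<forall>m\<ge>N. \<forall>n\<ge>N. L2norm M (\<lambda>x. RS h s m x - RS h s n x) < e"
  proof (intro exI allI impI)
    fix m n assume m: "N0 \<le> m" and n: "N0 \<le> n"
    have mp: "m > 0" and np: "n > 0" using m n N0p by auto
    have sdl: "s / real k \<le> dl" if "N0 \<le> k" for k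
    proof -
      have "s / dl < real k" using N0 that by linarith
      then show ?thesis using dl s0 that N0p by (simp add: field_simps)
    qed
    have c1: "L2norm M (\<lambda>x. RS h s (m * n) x - RS h s m x) \<le> s * (e / (3 * s))"
      by (rule RS_cauchy1[OF hL2 s0 mp np d sdl[OF m]])
    have c2: "L2norm M (\<lambda>x. RS h s (n * m) x - RS h s n x) \<le> s * (e / (3 * s))"
      by (rule RS_cauchy1[OF hL2 s0 np mp d sdl[OF n]])
    have "L2norm M (\<lambda>x. RS h s m x - RS h s n x)
        \<le> L2norm M (\<lambda>x. RS h s m x - RS h s (m * n) x) + L2norm M (\<lambda>x. RS h s (m * n) x - RS h s n x)"
      using RS_L2[OF hL2] s0 by (intro minkowski_diff) auto
    also have "\<dots> \<le> s * (e / (3 * s)) + s * (e / (3 * s))"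
      using c1 c2 L2norm_commute[of M "RS h s m" "RS h s (m * n)"] by (simp add: mult.commute[of n m])
    also have "\<dots> < e" using e s0 by (simp add: field_simps)
    finally show "L2norm M (\<lambda>x. RS h s m x - RS h s n x) < e" .
  qed
qed

end

lemma L2norm_6:
  assumes "g1 \<in> L2 M" "g2 \<in> L2 M" "g3 \<in> L2 M" "g4 \<in> L2 M" "g5 \<in> L2 M" "g6 \<in> L2 M"
  shows "L2norm M (\<lambda>x. g1 x + g2 x + g3 x + g4 x - g5 x + g6 x)
     \<le> L2norm M g1 + L2norm M g2 + L2norm M g3 + L2norm M g4 + L2norm M g5 + L2norm M g6"
proof -
  have a12: "(\<lambda>x. g1 x + g2 x) \<in> L2 M" using assms by (intro L2_add)
  have a123: "(\<lambda>x. g1 x + g2 x + g3 x) \<in> L2 M" using a12 assms by (intro L2_add)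
  have a1234: "(\<lambda>x. g1 x + g2 x + g3 x + g4 x) \<in> L2 M" using a123 assms by (intro L2_add)
  have a5: "(\<lambda>x. g1 x + g2 x + g3 x + g4 x - g5 x) \<in> L2 M" using a1234 assms by (intro L2_diff)
  have "L2norm M (\<lambda>x. g1 x + g2 x + g3 x + g4 x - g5 x + g6 x)
      \<le> L2norm M (\<lambda>x. g1 x + g2 x + g3 x + g4 x - g5 x) + L2norm M g6"
    using minkowski[OF a5 assms(6)] by simp
  also have "L2norm M (\<lambda>x. g1 x + g2 x + g3 x + g4 x - g5 x) \<le> L2norm M (\<lambda>x. g1 x + g2 x + g3 x + g4 x) + L2norm M g5"
    using minkowski[OF a1234 L2_uminus[OF assms(5)]] L2norm_uminus[of M g5] by simp
  also have "L2norm M (\<lambda>x. g1 x + g2 x + g3 x + g4 x) \<le> L2norm M (\<lambda>x. g1 x + g2 x + g3 x) + L2norm M g4"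
    using minkowski[OF a123 assms(4)] by simp
  also have "L2norm M (\<lambda>x. g1 x + g2 x + g3 x) \<le> L2norm M (\<lambda>x. g1 x + g2 x) + L2norm M g3"
    using minkowski[OF a12 assms(3)] by simp
  also have "L2norm M (\<lambda>x. g1 x + g2 x) \<le> L2norm M g1 + L2norm M g2"
    using minkowski[OF assms(1,2)] by simp
  finally show ?thesis by simp
qed

context hs
begin

lemma RS_claim:
  assumes hL2: "h \<in> L2 M" and s0: "s > 0" and FL2: "F \<in> L2 M"
    and Fl: "\<forall>e>0. \<exists>N0. \<forall>n\<ge>N0. L2norm M (\<lambda>x. F x - RS h s n x) < e"
    and e: "e > 0" and d: "\<And>v. 0 \<le> v \<Longrightarrow> v < dl \<Longrightarrow> L2norm M (\<lambda>x. T v h x - h x) < e"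
    and t0: "0 < t" and tdl: "t < dl"
  shows "L2norm M (\<lambda>x. T t F x - F x + complex_of_real t * (h x - T s h x)) \<le> 6 * (t * e)"
proof -
  define H where "H = (\<lambda>x. h x - T s h x)"
  have HL2: "H \<in> L2 M" unfolding H_def using hL2 s0 by (intro L2_diff L2T) auto
  define NH where "NH = L2norm M H"
  have NH0: "NH \<ge> 0" by (simp add: NH_def L2norm_nonneg)
  have te: "t * e > 0" using t0 e by simp
  obtain dl2 where dl2: "dl2 > 0" and d2: "\<And>v. 0 \<le> v \<Longrightarrow> v < dl2 \<Longrightarrow> L2norm M (\<lambda>x. T v h x - h x) < t * e / s"
    using Tmod[OF hL2, of "t * e / s"] te s0 by auto
  obtain N0 where N0: "\<And>n. n \<ge> N0 \<Longrightarrow> L2norm M (\<lambda>x. F x - RS h s n x) < t * e" using Fl te by blast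
  obtain N1 :: nat where N1: "s / dl2 + s * NH / (t * e) + 1 < N1" using reals_Archimedean2 by blast
  define n where "n = max N0 N1"
  have nN0: "n \<ge> N0" and nN1: "real n \<ge> real N1" by (auto simp: n_def)
  have npos: "n > 0"
  proof -
    have "0 \<le> s / dl2 + s * NH / (t * e)" using s0 dl2 NH0 te by simp
    then have "real N1 > 1" using N1 by linarith
    then show ?thesis using nN1 by linarith
  qed
  define d where "d = s / real n"
  have d0: "d > 0" using s0 npos by (simp add: d_def)
  have nd: "real n * d = s" using npos by (simp add: d_def)
  have ddl2: "d < dl2"
  proof -
    have "s / dl2 < real n" using N1 nN1 s0 dl2 NH0 te by (smt (verit) divide_nonneg_nonneg mult_nonneg_nonneg)
    then show ?thesis using dl2 npos s0 by (simp add: d_def field_simps)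
  qed
  have dNH: "d * NH \<le> t * e"
  proof -
    have "s * NH / (t * e) < real n" using N1 nN1 s0 dl2 NH0 te by (smt (verit) divide_nonneg_nonneg)
    then have "s * NH < real n * (t * e)" using te by (simp add: field_simps)
    then have "s * NH / real n < t * e" using npos by (simp add: field_simps)
    then show ?thesis by (simp add: d_def)
  qed
  define m where "m = nat (floor (t / d))"
  have mfl: "real m = of_int (floor (t / d))" using t0 d0 by (simp add: m_def)
  have md: "real m * d \<le> t"
  proof -
    have "real m \<le> t / d" using mfl by simp
    then show ?thesis using d0 by (simp add: field_simps)
  qed
  have md2: "t < real m * d + d"
  proof -
    have "t / d < real m + 1" using mfl by linarith
    then show ?thesis using d0 by (simp add: field_simps)
  qed
  define r where "r = t - real m * d"
  have r0: "r \<ge> 0" and rd: "r < d" using md md2 by (auto simp: r_def)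
  define RN where "RN = RS h s n"
  have RNL2: "RN \<in> L2 M" unfolding RN_def using RS_L2[OF hL2] s0 by simp
  have RN_eq: "RN x = (\<Sum>k<n. complex_of_real d * T (real k * d) h x)" for x
    unfolding RN_def RS_def d_def by (simp add: algebra_simps)
  have TRN: "AE x in M. T t RN x = (\<Sum>k<n. complex_of_real d * T (t + real k * d) h x)"
  proof -
    have RN_fun: "RN = (\<lambda>y. \<Sum>k\<in>{..<n}. complex_of_real d * T (real k * d) h y)"
      using RN_eq by auto
    have a1: "AE x in M. T t (\<lambda>y. \<Sum>k\<in>{..<n}. complex_of_real d * T (real k * d) h y) x
           = (\<Sum>k\<in>{..<n}. complex_of_real d * T t (T (real k * d) h) x)"
      using t0 d0 hL2 by (intro Tsum L2T) auto
    have a2: "AE x in M. \<forall>k\<in>{..<n}. T t (T (real k * d) h) x = T (t + real k * d) h x"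
      by (rule AE_finite_allI) (use t0 d0 hL2 in \<open>auto intro!: AE_symmetric[OF Tsemi]\<close>)
    show ?thesis unfolding RN_fun using a1 a2 by eventually_elim simp
  qed
  define A1 where "A1 = (\<lambda>x. T t F x - T t RN x)"
  define A2 where "A2 = (\<lambda>x. RN x - F x)"
  define E1 where "E1 = (\<lambda>x. \<Sum>k<n. complex_of_real d * (T (t + real k * d) h x - T (real (k + m) * d) h x))"
  define E2 where "E2 = (\<lambda>x. \<Sum>k<m. complex_of_real d * (T (real (n + k) * d) h x - T s h x))"
  define E3 where "E3 = (\<lambda>x. \<Sum>k<m. complex_of_real d * (T (real k * d) h x - h x))"
  define E4 where "E4 = (\<lambda>x. complex_of_real (t - real m * d) * H x)"
  have A1L2: "A1 \<in> L2 M" unfolding A1_def using t0 FL2 RNL2 by (intro L2_diff L2T) auto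
  have A2L2: "A2 \<in> L2 M" unfolding A2_def using FL2 RNL2 by (intro L2_diff)
  have E1L2: "E1 \<in> L2 M" unfolding E1_def using t0 d0 hL2 by (intro L2_sum L2_cmult L2_diff L2T) auto
  have E2L2: "E2 \<in> L2 M" unfolding E2_def using s0 d0 hL2 by (intro L2_sum L2_cmult L2_diff L2T) auto
  have E3L2: "E3 \<in> L2 M" unfolding E3_def using d0 hL2 by (intro L2_sum L2_cmult L2_diff L2T) auto
  have E4L2: "E4 \<in> L2 M" unfolding E4_def using HL2 by (intro L2_cmult)
  have nA1: "L2norm M A1 \<le> t * e"
  proof -
    have "L2norm M A1 \<le> L2norm M (\<lambda>x. F x - RN x)" unfolding A1_def using t0 by (intro Tcontr_diff FL2 RNL2) auto
    also have "\<dots> < t * e" using N0[OF nN0] by (simp add: RN_def)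
    finally show ?thesis by simp
  qed
  have nA2: "L2norm M A2 \<le> t * e"
    using N0[OF nN0] L2norm_commute[of M RN F] by (simp add: A2_def RN_def)
  have nE1: "L2norm M E1 \<le> t * e"
  proof -
    have "L2norm M E1 \<le> real (card {..<n}) * d * (t * e / s)"
      unfolding E1_def
    proof (rule blk)
      fix k assume "k \<in> {..<n}"
      have b0: "real (k + m) * d \<ge> 0" using d0 by simp
      have eqk: "t + real k * d = real (k + m) * d + r" by (simp add: r_def algebra_simps)
      show "(\<lambda>x. T (t + real k * d) h x - T (real (k + m) * d) h x) \<in> L2 M"
        using t0 d0 hL2 by (intro L2_diff L2T) auto
      have "L2norm M (\<lambda>x. T (t + real k * d) h x - T (real (k + m) * d) h x) \<le> L2norm M (\<lambda>x. T r h x - h x)"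
        unfolding eqk by (rule Tshift[OF b0 r0 hL2])
      also have "\<dots> < t * e / s" using d2[OF r0] rd ddl2 by simp
      finally show "L2norm M (\<lambda>x. T (t + real k * d) h x - T (real (k + m) * d) h x) \<le> t * e / s" by simp
    qed (use d0 in auto)
    also have "\<dots> = t * e" using nd s0 by (simp add: field_simps)
    finally show ?thesis .
  qed
  have nE2: "L2norm M E2 \<le> t * e"
  proof -
    have "L2norm M E2 \<le> real (card {..<m}) * d * e"
      unfolding E2_def
    proof (rule blk)
      fix k assume k: "k \<in> {..<m}"
      have v0: "real k * d \<ge> 0" using d0 by simp
      have eqk: "real (n + k) * d = s + real k * d" using nd by (simp add: algebra_simps)
      show "(\<lambda>x. T (real (n + k) * d) h x - T s h x) \<in> L2 M"
        using s0 d0 hL2 by (intro L2_diff L2T) auto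
      have "real k * d < t"
      proof -
        have "real k * d < real m * d" using k d0 by simp
        then show ?thesis using md by linarith
      qed
      then have kdl: "real k * d < dl" using tdl by linarith
      have "L2norm M (\<lambda>x. T (real (n + k) * d) h x - T s h x) \<le> L2norm M (\<lambda>x. T (real k * d) h x - h x)"
        unfolding eqk using s0 by (intro Tshift v0 hL2) auto
      also have "\<dots> < e" using d[OF v0 kdl] .
      finally show "L2norm M (\<lambda>x. T (real (n + k) * d) h x - T s h x) \<le> e" by simp
    qed (use d0 in auto)
    also have "\<dots> \<le> t * e" using md e by (simp add: mult_right_mono)
    finally show ?thesis .
  qed
  have nE3: "L2norm M E3 \<le> t * e"
  proof -
    have "L2norm M E3 \<le> real (card {..<m}) * d * e"
      unfolding E3_def
    proof (rule blk)
      fix k assume k: "k \<in> {..<m}"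
      have v0: "real k * d \<ge> 0" using d0 by simp
      show "(\<lambda>x. T (real k * d) h x - h x) \<in> L2 M"
        using d0 hL2 by (intro L2_diff L2T) auto
      have "real k * d < t"
      proof -
        have "real k * d < real m * d" using k d0 by simp
        then show ?thesis using md by linarith
      qed
      then have kdl: "real k * d < dl" using tdl by linarith
      show "L2norm M (\<lambda>x. T (real k * d) h x - h x) \<le> e" using d[OF v0 kdl] by simp
    qed (use d0 in auto)
    also have "\<dots> \<le> t * e" using md e by (simp add: mult_right_mono)
    finally show ?thesis .
  qed
  have nE4: "L2norm M E4 \<le> t * e"
  proof -
    have c: "cmod (complex_of_real (t - real m * d)) = t - real m * d" using md by (simp only: norm_of_real)
    have "L2norm M E4 = (t - real m * d) * NH" unfolding E4_def NH_def L2norm_cmult c ..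
    also have "\<dots> \<le> d * NH" using rd NH0 by (intro mult_right_mono) (auto simp: r_def)
    also have "\<dots> \<le> t * e" by (rule dNH)
    finally show ?thesis .
  qed
  have ident: "T t F x - F x + complex_of_real t * H x = A1 x + A2 x + E1 x + E2 x - E3 x + E4 x"
    if TRNx: "T t RN x = (\<Sum>k<n. complex_of_real d * T (t + real k * d) h x)" for x
  proof -
    define a where "a j = complex_of_real d * T (real j * d) h x" for j
    have sh: "(\<Sum>k<n. a (k + m)) - (\<Sum>k<n. a k) = (\<Sum>k<m. a (n + k)) - (\<Sum>k<m. a k)"
      by (rule sum_shift_diff)
    have e1: "E1 x = (\<Sum>k<n. complex_of_real d * T (t + real k * d) h x) - (\<Sum>k<n. a (k + m))"
      unfolding E1_def a_def by (simp add: sum_subtractf right_diff_distrib)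
    have e2: "E2 x = (\<Sum>k<m. a (n + k)) - of_nat m * complex_of_real d * T s h x"
      unfolding E2_def a_def by (simp add: sum_subtractf right_diff_distrib)
    have e3: "E3 x = (\<Sum>k<m. a k) - of_nat m * complex_of_real d * h x"
      unfolding E3_def a_def by (simp add: sum_subtractf right_diff_distrib)
    have rn: "RN x = (\<Sum>k<n. a k)" unfolding a_def by (rule RN_eq)
    show ?thesis
      unfolding A1_def A2_def E4_def H_def e1 e2 e3 TRNx rn
      using sh by (simp add: algebra_simps)
  qed
  have "L2norm M (\<lambda>x. T t F x - F x + complex_of_real t * (h x - T s h x))
      = L2norm M (\<lambda>x. A1 x + A2 x + E1 x + E2 x - E3 x + E4 x)"
  proof (rule L2norm_cong_AE)
    show "(\<lambda>x. T t F x - F x + complex_of_real t * (h x - T s h x)) \<in> borel_measurable M"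
      using t0 s0 FL2 hL2 by (intro L2_D(1) L2_add L2_diff L2_cmult L2T) auto
    show "(\<lambda>x. A1 x + A2 x + E1 x + E2 x - E3 x + E4 x) \<in> borel_measurable M"
      using A1L2 A2L2 E1L2 E2L2 E3L2 E4L2 by (intro L2_D(1) L2_add L2_diff)
    show "AE x in M. T t F x - F x + complex_of_real t * (h x - T s h x) = A1 x + A2 x + E1 x + E2 x - E3 x + E4 x"
      using TRN by eventually_elim (use ident in \<open>simp add: H_def\<close>)
  qed
  also have "\<dots> \<le> L2norm M A1 + L2norm M A2 + L2norm M E1 + L2norm M E2 + L2norm M E3 + L2norm M E4"
    by (rule L2norm_6[OF A1L2 A2L2 E1L2 E2L2 E3L2 E4L2])
  also have "\<dots> \<le> 6 * (t * e)" using nA1 nA2 nE1 nE2 nE3 nE4 by linarith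
  finally show ?thesis .
qed

end

context hs
begin

lemma RS_opg:
  assumes hL2: "h \<in> L2 M" and s0: "s > 0"
  shows "\<exists>F. op_graph M T F (\<lambda>x. h x - T s h x)"
proof -
  obtain F where FL2: "F \<in> L2 M" and Fl: "\<forall>e>0. \<exists>N0. \<forall>n\<ge>N0. L2norm M (\<lambda>x. F x - RS h s n x) < e"
    using RS_limit[OF hL2 s0] by blast
  have HL2: "(\<lambda>x. h x - T s h x) \<in> L2 M" using hL2 s0 by (intro L2_diff L2T) auto
  have "((\<lambda>t. L2norm M (\<lambda>x. (T t F x - F x) / complex_of_real t + (h x - T s h x))) \<longlongrightarrow> 0) (at_right 0)"
  proof (rule order_tendstoI)
    fix a :: real assume "a < 0"
    then show "\<forall>\<^sub>F t in at_right 0. a < L2norm M (\<lambda>x. (T t F x - F x) / complex_of_real t + (h x - T s h x))"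
      using L2norm_nonneg by (intro always_eventually allI) (auto intro: less_le_trans)
  next
    fix a :: real assume a: "0 < a"
    define e where "e = a / 7"
    have e0: "e > 0" using a by (simp add: e_def)
    obtain dl where dl: "dl > 0" and d: "\<And>v. 0 \<le> v \<Longrightarrow> v < dl \<Longrightarrow> L2norm M (\<lambda>x. T v h x - h x) < e"
      using Tmod[OF hL2 e0] by auto
    show "\<forall>\<^sub>F t in at_right 0. L2norm M (\<lambda>x. (T t F x - F x) / complex_of_real t + (h x - T s h x)) < a"
      unfolding eventually_at_right_field
    proof (intro exI[of _ dl] conjI allI impI dl)
      fix t :: real assume t0: "0 < t" and tdl: "t < dl"
      have eq: "(\<lambda>x. (T t F x - F x) / complex_of_real t + (h x - T s h x))
          = (\<lambda>x. (T t F x - F x + complex_of_real t * (h x - T s h x)) / complex_of_real t)"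
        using t0 by (auto simp: field_simps)
      have "L2norm M (\<lambda>x. (T t F x - F x) / complex_of_real t + (h x - T s h x))
          = L2norm M (\<lambda>x. T t F x - F x + complex_of_real t * (h x - T s h x)) / t"
        unfolding eq L2norm_divide using t0 by simp
      also have "\<dots> \<le> 6 * (t * e) / t"
        using RS_claim[OF hL2 s0 FL2 Fl e0 d t0 tdl] t0 by (intro divide_right_mono) auto
      also have "\<dots> = 6 * e" using t0 by simp
      also have "\<dots> < a" using a by (simp add: e_def)
      finally show "L2norm M (\<lambda>x. (T t F x - F x) / complex_of_real t + (h x - T s h x)) < a" .
    qed
  qed
  then have "op_graph M T F (\<lambda>x. h x - T s h x)" unfolding op_graph_def using FL2 HL2 by simp
  then show ?thesis by blast
qed

end

lemma le_all_eps: fixes x :: real assumes "\<And>e. e > 0 \<Longrightarrow> x \<le> e" shows "x \<le> 0"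
  using eps_zero[of 1 x] assms by simp

theorem mainTheorem5:
  fixes mu :: "('a::metric_space) measure"
    and T :: "real \<Rightarrow> ('a \<Rightarrow> complex) \<Rightarrow> ('a \<Rightarrow> complex)"
    and p0 \<beta>1 \<beta>2 :: real
  assumes "mms mu"
    and "\<not> compact (UNIV :: 'a set)"
    and "doubling mu"
    and "reverse_doubling mu"
    and "1 < \<beta>1" and "\<beta>1 \<le> \<beta>2"
    and "1 \<le> p0" and "p0 < 2"
    and "heat_semigroup mu T"
    and "DG mu T p0 \<beta>1 \<beta>2"
  shows "null_space_trivial mu T \<and> range_dense mu T"
proof -
  define z0 :: 'a where "z0 = undefined"
  interpret dgctx mu T p0 \<beta>1 \<beta>2 z0
    by (intro dgctx.intro dgctx_axioms.intro hs.intro) (use assms in auto)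
  have null: "null_space_trivial mu T"
    unfolding null_space_trivial_def
  proof (intro allI impI)
    fix f assume og: "op_graph mu T f (\<lambda>x. 0)"
    have fL2: "f \<in> L2 mu" using og by (simp add: op_graph_def)
    have mf: "f \<in> borel_measurable mu" using fL2 by (rule L2_D)
    define q where "q n x = indicator (ball z0 (real n)) x * (if cmod (f x) \<le> real n then (cmod (f x))\<^sup>2 else 0)" for n x
    have qeq: "f x * cnj (trunc z0 n f x) = complex_of_real (q n x)" for n x
    proof -
      have c: "f x * cnj (f x) = complex_of_real ((cmod (f x))\<^sup>2)" by (rule complex_norm_square[symmetric])
      show ?thesis
      proof (cases "x \<in> ball z0 (real n)")
        case True
        then have t: "trunc z0 n f x = (if cmod (f x) \<le> real n then f x else 0)"
          and qq: "q n x = (if cmod (f x) \<le> real n then (cmod (f x))\<^sup>2 else 0)"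
          by (simp_all add: trunc_def q_def)
        show ?thesis unfolding t qq using c by simp
      next
        case False
        then show ?thesis by (simp add: trunc_def q_def)
      qed
    qed
    have qint: "integrable mu (q n)" for n
    proof (rule Bochner_Integration.integrable_bound[OF L2_D(2)[OF fL2]])
      show "q n \<in> borel_measurable mu" unfolding q_def[abs_def] using mf ball_sets by measurable
      show "AE x in mu. norm (q n x) \<le> norm ((cmod (f x))\<^sup>2)"
        by (rule AE_I2) (auto simp: q_def indicator_def)
    qed
    have q0: "(\<integral>x. q n x \<partial>mu) = 0" for n
    proof -
      define g where "g = trunc z0 n f"
      have gm: "g \<in> borel_measurable mu" unfolding g_def by (rule trunc_meas[OF sb mf])
      have gL2: "g \<in> L2 mu" unfolding g_def by (rule trunc_L2[OF sb fL2])
      have "cmod (\<integral>x. f x * cnj (g x) \<partial>mu) \<le> 0"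
      proof (rule le_all_eps)
        fix e :: real assume e: "e > 0"
        obtain t where t0: "t > 0" and tb: "cmod (\<integral>x. f x * cnj (T (rho \<beta>1 \<beta>2 t) g x) \<partial>mu) \<le> e"
          using decay[OF fL2 gm _ _ e, of "real n" "real n"] unfolding g_def
          using trunc_le_n trunc_supp by blast
        have "(\<integral>x. f x * cnj (g x) \<partial>mu) = (\<integral>x. f x * cnj (T (rho \<beta>1 \<beta>2 t) g x) \<partial>mu)"
          by (rule opg_inv[OF og gL2 rho_nonneg])
        then show "cmod (\<integral>x. f x * cnj (g x) \<partial>mu) \<le> e" using tb by simp
      qed
      then have "(\<integral>x. f x * cnj (g x) \<partial>mu) = 0" by simp
      then have "complex_of_real (\<integral>x. q n x \<partial>mu) = 0" unfolding g_def qeq by simp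
      then show ?thesis by simp
    qed
    have "AE x in mu. q n x = 0" for n
      using integral_nonneg_eq_0_iff_AE[OF qint[of n]] q0[of n] by (auto simp: q_def indicator_def)
    then have "AE x in mu. \<forall>n. q n x = 0" by (simp add: AE_all_countable)
    then show "AE x in mu. f x = 0"
    proof eventually_elim
      case (elim x)
      obtain N :: nat where N: "dist z0 x + cmod (f x) < N" using reals_Archimedean2 by blast
      have "dist z0 x < real N" using N norm_ge_zero[of "f x"] by linarith
      moreover have "cmod (f x) \<le> real N" using N zero_le_dist[of z0 x] by linarith
      ultimately have "q N x = (cmod (f x))\<^sup>2" by (simp add: q_def)
      then show ?case using elim[rule_format, of N] by simp
    qed
  qed
  have range: "range_dense mu T"
    unfolding range_dense_def
  proof (intro ballI allI impI)
    fix h :: "'a \<Rightarrow> complex" and eps :: real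
    assume hL2: "h \<in> L2 mu" and eps: "eps > 0"
    obtain n where n: "L2norm mu (\<lambda>x. h x - trunc z0 n h x) < eps / 3"
      using trunc_approx[OF sb hL2, of "eps / 3" z0] eps by auto
    define h0 where "h0 = trunc z0 n h"
    have h0m: "h0 \<in> borel_measurable mu" unfolding h0_def by (rule trunc_meas[OF sb L2_D(1)[OF hL2]])
    have h0L2: "h0 \<in> L2 mu" unfolding h0_def by (rule trunc_L2[OF sb hL2])
    have e2: "(eps / 3)\<^sup>2 > 0" using eps by simp
    obtain t where t0: "t > 0" and tb: "cmod (\<integral>x. h0 x * cnj (T (rho \<beta>1 \<beta>2 t) h0 x) \<partial>mu) \<le> (eps / 3)\<^sup>2"
      using decay[OF h0L2 h0m _ _ e2, of "real n" "real n"] unfolding h0_def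
      using trunc_le_n trunc_supp by blast
    define s where "s = rho \<beta>1 \<beta>2 t / 2"
    have rpos: "rho \<beta>1 \<beta>2 t > 0" using t0 by (simp add: rho_def)
    have s0: "s > 0" using rpos by (simp add: s_def)
    have TsL2: "T s h0 \<in> L2 mu" using s0 h0L2 by (intro L2T) auto
    have "complex_of_real ((L2norm mu (T s h0))\<^sup>2) = complex_of_real (\<integral>x. (cmod (T s h0 x))\<^sup>2 \<partial>mu)"
      by (simp only: L2norm_sq)
    also have "\<dots> = (\<integral>x. complex_of_real ((cmod (T s h0 x))\<^sup>2) \<partial>mu)"
      by (rule integral_complex_of_real[symmetric])
    also have "\<dots> = (\<integral>x. T s h0 x * cnj (T s h0 x) \<partial>mu)"
      by (simp only: complex_norm_square)
    also have "\<dots> = (\<integral>x. h0 x * cnj (T s (T s h0) x) \<partial>mu)" by (rule Tsa[OF _ h0L2 TsL2]) (use s0 in simp)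
    also have "\<dots> = (\<integral>x. h0 x * cnj (T (rho \<beta>1 \<beta>2 t) h0 x) \<partial>mu)"
    proof (rule ip_cong2[OF h0L2])
      show "T s (T s h0) \<in> L2 mu" by (rule L2T[OF _ TsL2]) (use s0 in simp)
      show "T (rho \<beta>1 \<beta>2 t) h0 \<in> L2 mu" using rpos h0L2 by (intro L2T) auto
      show "AE x in mu. T s (T s h0) x = T (rho \<beta>1 \<beta>2 t) h0 x"
      proof -
        have ss: "s + s = rho \<beta>1 \<beta>2 t" by (simp add: s_def)
        have a: "AE x in mu. T (s + s) h0 x = T s (T s h0) x" by (rule Tsemi) (use s0 h0L2 in auto)
        show ?thesis using a unfolding ss by eventually_elim simp
      qed
    qed
    finally have eqc: "complex_of_real ((L2norm mu (T s h0))\<^sup>2) = (\<integral>x. h0 x * cnj (T (rho \<beta>1 \<beta>2 t) h0 x) \<partial>mu)" .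
    have "(L2norm mu (T s h0))\<^sup>2 = cmod (complex_of_real ((L2norm mu (T s h0))\<^sup>2))"
      by (simp only: norm_of_real abs_power2)
    also have "\<dots> \<le> (eps / 3)\<^sup>2" unfolding eqc by (rule tb)
    finally have "(L2norm mu (T s h0))\<^sup>2 \<le> (eps / 3)\<^sup>2" .
    then have Tsn: "L2norm mu (T s h0) \<le> eps / 3"
      by (rule power2_le_imp_le) (use eps in auto)
    obtain F where F: "op_graph mu T F (\<lambda>x. h0 x - T s h0 x)" using RS_opg[OF h0L2 s0] by blast
    have "L2norm mu (\<lambda>x. (h0 x - T s h0 x) - h x) \<le> L2norm mu (\<lambda>x. h0 x - h x) + L2norm mu (\<lambda>x. - T s h0 x)"
      using minkowski[OF L2_diff[OF h0L2 hL2] L2_uminus[OF TsL2]] by (simp add: algebra_simps)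
    also have "\<dots> = L2norm mu (\<lambda>x. h x - h0 x) + L2norm mu (T s h0)"
      using L2norm_commute[of mu h0 h] L2norm_uminus[of mu "T s h0"] by simp
    also have "\<dots> < eps" using n Tsn eps by (simp add: h0_def)
    finally show "\<exists>f g. op_graph mu T f g \<and> L2norm mu (\<lambda>x. g x - h x) < eps"
      using F by blast
  qed
  show ?thesis using null range by simp
qed

end
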